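(* Let $\mathscr{A}$ be a pointed category with finite coproducts and cokernels, $\mathbb{T}$ a finite category and $\mathbb{S}$ a replete full subcategory of $\mathbb{T}$. Then the full subcategory $\mathscr{F}$ of $\mathscr{A}^\mathbb{T}$ consisting of the functors $F$ with $F(T)=0$ for all $T\notin\mathbb{S}$ is a normal epi-reflective subcategory of $\mathscr{A}^\mathbb{T}$, the reflection of $F$ being given pointwise by $T\mapsto\mathrm{Cok}([F(t)]_{t\in[T]})$ with unit components $\mathrm{cok}([F(t)]_{t\in[T]})$.
   Context: For $T\in\mathbb{T}$, $[T]$ is the finite set of morphisms $t:T'\to T$ in $\mathbb{T}$ with $T'\notin\mathbb{S}$, $d(t):=T'$, and $[F(t)]_{t\in[T]}:\bigoplus_{t\in[T]}F(d(t))\to F(T)$ is the morphism induced by the $F(t)$ via the coproduct. A subcategory is normal epi-reflective if it is reflective and every unit component is a normal epimorphism (a cokernel of some morphism). *)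

theory Defs
  imports "HOL-Library.FuncSet"
begin

text \<open>Categories, given by a set of objects, a set of arrows, domain, codomain,
identities and composition (cmp g f = g o f).\<close>

record ('o,'m) cat =
  Obj :: "'o set"
  Arr :: "'m set"
  Dom :: "'m \<Rightarrow> 'o"
  Cod :: "'m \<Rightarrow> 'o"
  Idm :: "'o \<Rightarrow> 'm"
  Cmp :: "'m \<Rightarrow> 'm \<Rightarrow> 'm"

definition hom :: "('o,'m) cat \<Rightarrow> 'o \<Rightarrow> 'o \<Rightarrow> 'm set" where
  "hom C a b = {f \<in> Arr C. Dom C f = a \<and> Cod C f = b}"

definition category :: "('o,'m) cat \<Rightarrow> bool" where
  "category C \<longleftrightarrow>
     (\<forall>f \<in> Arr C. Dom C f \<in> Obj C \<and> Cod C f \<in> Obj C) \<and>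
     (\<forall>a \<in> Obj C. Idm C a \<in> hom C a a) \<and>
     (\<forall>f \<in> Arr C. \<forall>g \<in> Arr C. Cod C f = Dom C g \<longrightarrow>
         Cmp C g f \<in> hom C (Dom C f) (Cod C g)) \<and>
     (\<forall>f \<in> Arr C. Cmp C (Idm C (Cod C f)) f = f \<and> Cmp C f (Idm C (Dom C f)) = f) \<and>
     (\<forall>f \<in> Arr C. \<forall>g \<in> Arr C. \<forall>h \<in> Arr C.
         Cod C f = Dom C g \<and> Cod C g = Dom C h \<longrightarrow>
         Cmp C h (Cmp C g f) = Cmp C (Cmp C h g) f)"

definition finite_category :: "('o,'m) cat \<Rightarrow> bool" where
  "finite_category C \<longleftrightarrow> category C \<and> finite (Obj C) \<and> finite (Arr C)"

definition is_iso :: "('o,'m) cat \<Rightarrow> 'm \<Rightarrow> bool" where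
  "is_iso C f \<longleftrightarrow> f \<in> Arr C \<and>
     (\<exists>g \<in> hom C (Cod C f) (Dom C f).
        Cmp C g f = Idm C (Dom C f) \<and> Cmp C f g = Idm C (Cod C f))"

definition replete_full_subcat :: "('o,'m) cat \<Rightarrow> 'o set \<Rightarrow> bool" where
  "replete_full_subcat C S \<longleftrightarrow> S \<subseteq> Obj C \<and>
     (\<forall>f. is_iso C f \<and> Dom C f \<in> S \<longrightarrow> Cod C f \<in> S)"

definition is_initial :: "('o,'m) cat \<Rightarrow> 'o \<Rightarrow> bool" where
  "is_initial C z \<longleftrightarrow> z \<in> Obj C \<and> (\<forall>a \<in> Obj C. \<exists>!f. f \<in> hom C z a)"

definition is_terminal :: "('o,'m) cat \<Rightarrow> 'o \<Rightarrow> bool" where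
  "is_terminal C z \<longleftrightarrow> z \<in> Obj C \<and> (\<forall>a \<in> Obj C. \<exists>!f. f \<in> hom C a z)"

definition is_zero_obj :: "('o,'m) cat \<Rightarrow> 'o \<Rightarrow> bool" where
  "is_zero_obj C z \<longleftrightarrow> is_initial C z \<and> is_terminal C z"

definition pointed :: "('o,'m) cat \<Rightarrow> bool" where
  "pointed C \<longleftrightarrow> (\<exists>z. is_zero_obj C z)"

definition is_zero_arr :: "('o,'m) cat \<Rightarrow> 'm \<Rightarrow> bool" where
  "is_zero_arr C f \<longleftrightarrow> f \<in> Arr C \<and>
     (\<exists>z g h. is_zero_obj C z \<and> g \<in> hom C (Dom C f) z \<and> h \<in> hom C z (Cod C f)
              \<and> f = Cmp C h g)"

definition is_coproduct ::
  "('o,'m) cat \<Rightarrow> 'i set \<Rightarrow> ('i \<Rightarrow> 'o) \<Rightarrow> 'o \<Rightarrow> ('i \<Rightarrow> 'm) \<Rightarrow> bool" where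
  "is_coproduct C I X P \<iota> \<longleftrightarrow> P \<in> Obj C \<and>
     (\<forall>i \<in> I. \<iota> i \<in> hom C (X i) P) \<and>
     (\<forall>Y \<in> Obj C. \<forall>f. (\<forall>i \<in> I. f i \<in> hom C (X i) Y) \<longrightarrow>
        (\<exists>!h. h \<in> hom C P Y \<and> (\<forall>i \<in> I. Cmp C h (\<iota> i) = f i)))"

definition has_finite_coproducts :: "('o,'m) cat \<Rightarrow> bool" where
  "has_finite_coproducts C \<longleftrightarrow>
     (\<forall>(n::nat) (X::nat \<Rightarrow> 'o). (\<forall>i < n. X i \<in> Obj C) \<longrightarrow>
        (\<exists>P \<iota>. is_coproduct C {..<n} X P \<iota>))"

definition is_cokernel :: "('o,'m) cat \<Rightarrow> 'm \<Rightarrow> 'm \<Rightarrow> bool" where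
  "is_cokernel C f q \<longleftrightarrow> f \<in> Arr C \<and> q \<in> Arr C \<and> Dom C q = Cod C f \<and>
     is_zero_arr C (Cmp C q f) \<and>
     (\<forall>g \<in> Arr C. Dom C g = Cod C f \<and> is_zero_arr C (Cmp C g f) \<longrightarrow>
        (\<exists>!h. h \<in> hom C (Cod C q) (Cod C g) \<and> Cmp C h q = g))"

definition has_cokernels :: "('o,'m) cat \<Rightarrow> bool" where
  "has_cokernels C \<longleftrightarrow> (\<forall>f \<in> Arr C. \<exists>q. is_cokernel C f q)"

definition normal_epi :: "('o,'m) cat \<Rightarrow> 'm \<Rightarrow> bool" where
  "normal_epi C q \<longleftrightarrow> (\<exists>f. is_cokernel C f q)"

definition is_reflection :: "('o,'m) cat \<Rightarrow> 'o set \<Rightarrow> 'o \<Rightarrow> 'o \<Rightarrow> 'm \<Rightarrow> bool" where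
  "is_reflection C D c r u \<longleftrightarrow> r \<in> D \<and> u \<in> hom C c r \<and>
     (\<forall>d \<in> D. \<forall>f \<in> hom C c d. \<exists>!g. g \<in> hom C r d \<and> Cmp C g u = f)"

definition reflective :: "('o,'m) cat \<Rightarrow> 'o set \<Rightarrow> bool" where
  "reflective C D \<longleftrightarrow> D \<subseteq> Obj C \<and> (\<forall>c \<in> Obj C. \<exists>r u. is_reflection C D c r u)"

text \<open>Normal epi-reflective: reflective and every unit component is a normal
epimorphism (units are unique up to isomorphism, so we require it of every
reflection arrow).\<close>

definition normal_epi_reflective :: "('o,'m) cat \<Rightarrow> 'o set \<Rightarrow> bool" where
  "normal_epi_reflective C D \<longleftrightarrow> reflective C D \<and>
     (\<forall>c r u. c \<in> Obj C \<and> is_reflection C D c r u \<longrightarrow> normal_epi C u)"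

type_synonym ('to,'tm,'ao,'am) ftor = "('to \<Rightarrow> 'ao) \<times> ('tm \<Rightarrow> 'am)"

definition is_functor :: "('to,'tm) cat \<Rightarrow> ('ao,'am) cat \<Rightarrow> ('to,'tm,'ao,'am) ftor \<Rightarrow> bool" where
  "is_functor T A F \<longleftrightarrow>
     (\<forall>x \<in> Obj T. fst F x \<in> Obj A) \<and>
     (\<forall>f \<in> Arr T. snd F f \<in> hom A (fst F (Dom T f)) (fst F (Cod T f))) \<and>
     (\<forall>x \<in> Obj T. snd F (Idm T x) = Idm A (fst F x)) \<and>
     (\<forall>f \<in> Arr T. \<forall>g \<in> Arr T. Cod T f = Dom T g \<longrightarrow>
        snd F (Cmp T g f) = Cmp A (snd F g) (snd F f)) \<and>
     (\<forall>x. x \<notin> Obj T \<longrightarrow> fst F x = undefined) \<and>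
     (\<forall>f. f \<notin> Arr T \<longrightarrow> snd F f = undefined)"

definition nat_trans ::
  "('to,'tm) cat \<Rightarrow> ('ao,'am) cat \<Rightarrow> ('to,'tm,'ao,'am) ftor \<Rightarrow> ('to,'tm,'ao,'am) ftor
     \<Rightarrow> ('to \<Rightarrow> 'am) \<Rightarrow> bool" where
  "nat_trans T A F G \<eta> \<longleftrightarrow> is_functor T A F \<and> is_functor T A G \<and>
     (\<forall>x \<in> Obj T. \<eta> x \<in> hom A (fst F x) (fst G x)) \<and>
     (\<forall>f \<in> Arr T. Cmp A (\<eta> (Cod T f)) (snd F f) = Cmp A (snd G f) (\<eta> (Dom T f))) \<and>
     (\<forall>x. x \<notin> Obj T \<longrightarrow> \<eta> x = undefined)"

definition funcat :: "('ao,'am) cat \<Rightarrow> ('to,'tm) cat \<Rightarrow>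
   (('to,'tm,'ao,'am) ftor,
    ('to,'tm,'ao,'am) ftor \<times> ('to,'tm,'ao,'am) ftor \<times> ('to \<Rightarrow> 'am)) cat" where
  "funcat A T = \<lparr>
     Obj = {F. is_functor T A F},
     Arr = {(F, G, \<eta>). nat_trans T A F G \<eta>},
     Dom = (\<lambda>(F, G, \<eta>). F),
     Cod = (\<lambda>(F, G, \<eta>). G),
     Idm = (\<lambda>F. (F, F, (\<lambda>x \<in> Obj T. Idm A (fst F x)))),
     Cmp = (\<lambda>(G', H, \<theta>) (F, G, \<eta>). (F, H, (\<lambda>x \<in> Obj T. Cmp A (\<theta> x) (\<eta> x))))\<rparr>"

text \<open>[x]: morphisms t : x' \<rightarrow> x of T with x' not in S.\<close>

definition bracket :: "('to,'tm) cat \<Rightarrow> 'to set \<Rightarrow> 'to \<Rightarrow> 'tm set" where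
  "bracket T S x = {t \<in> Arr T. Cod T t = x \<and> Dom T t \<notin> S}"

definition vanishing_outside ::
  "('ao,'am) cat \<Rightarrow> ('to,'tm) cat \<Rightarrow> 'to set \<Rightarrow> ('to,'tm,'ao,'am) ftor set" where
  "vanishing_outside A T S =
     {F. is_functor T A F \<and> (\<forall>x \<in> Obj T - S. is_zero_obj A (fst F x))}"

end

theory Submission
  imports Defs
begin

lemma homI: "f \<in> Arr C \<Longrightarrow> Dom C f = a \<Longrightarrow> Cod C f = b \<Longrightarrow> f \<in> hom C a b"
  by (simp add: hom_def)
lemma homD: "f \<in> hom C a b \<Longrightarrow> f \<in> Arr C \<and> Dom C f = a \<and> Cod C f = b"
  by (simp add: hom_def)

lemma cat_obj_dom: "category C \<Longrightarrow> f \<in> hom C a b \<Longrightarrow> a \<in> Obj C"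
  unfolding category_def hom_def by auto
lemma cat_obj_cod: "category C \<Longrightarrow> f \<in> hom C a b \<Longrightarrow> b \<in> Obj C"
  unfolding category_def hom_def by auto
lemma cat_id: "category C \<Longrightarrow> a \<in> Obj C \<Longrightarrow> Idm C a \<in> hom C a a"
  unfolding category_def by auto
lemma cat_comp: "category C \<Longrightarrow> f \<in> hom C a b \<Longrightarrow> g \<in> hom C b c \<Longrightarrow> Cmp C g f \<in> hom C a c"
  unfolding category_def hom_def by auto
lemma cat_idl: "category C \<Longrightarrow> f \<in> hom C a b \<Longrightarrow> Cmp C (Idm C b) f = f"
  unfolding category_def hom_def by auto
lemma cat_idr: "category C \<Longrightarrow> f \<in> hom C a b \<Longrightarrow> Cmp C f (Idm C a) = f"
  unfolding category_def hom_def by auto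
lemma cat_assoc: "category C \<Longrightarrow> f \<in> hom C a b \<Longrightarrow> g \<in> hom C b c \<Longrightarrow> h \<in> hom C c d
   \<Longrightarrow> Cmp C h (Cmp C g f) = Cmp C (Cmp C h g) f"
  unfolding category_def hom_def by auto

lemma arr_hom: "f \<in> Arr C \<Longrightarrow> f \<in> hom C (Dom C f) (Cod C f)"
  by (simp add: hom_def)

section \<open>Zero objects and arrows\<close>

lemma zero_init: "is_zero_obj C z \<Longrightarrow> a \<in> Obj C \<Longrightarrow> \<exists>!f. f \<in> hom C z a"
  unfolding is_zero_obj_def is_initial_def by auto
lemma zero_term: "is_zero_obj C z \<Longrightarrow> a \<in> Obj C \<Longrightarrow> \<exists>!f. f \<in> hom C a z"
  unfolding is_zero_obj_def is_terminal_def by auto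
lemma zero_obj: "is_zero_obj C z \<Longrightarrow> z \<in> Obj C"
  unfolding is_zero_obj_def is_initial_def by auto

lemma zero_init_uniq: "category C \<Longrightarrow> is_zero_obj C z \<Longrightarrow> f \<in> hom C z a \<Longrightarrow> g \<in> hom C z a \<Longrightarrow> f = g"
proof -
  assume C: "category C" and z: "is_zero_obj C z" and f: "f \<in> hom C z a" and g: "g \<in> hom C z a"
  show "f = g" using zero_init[OF z cat_obj_cod[OF C f]] f g by blast
qed
lemma zero_term_uniq: "category C \<Longrightarrow> is_zero_obj C z \<Longrightarrow> f \<in> hom C a z \<Longrightarrow> g \<in> hom C a z \<Longrightarrow> f = g"
proof -
  assume C: "category C" and z: "is_zero_obj C z" and f: "f \<in> hom C a z" and g: "g \<in> hom C a z"
  show "f = g" using zero_term[OF z cat_obj_dom[OF C f]] f g by blast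
qed

lemma through_zero:
  assumes "category C" "is_zero_obj C z" "g \<in> hom C a z" "h \<in> hom C z b"
  shows "is_zero_arr C (Cmp C h g)"
proof -
  have c: "Cmp C h g \<in> hom C a b" using cat_comp[OF assms(1,3,4)] .
  have d: "Cmp C h g \<in> Arr C" "Dom C (Cmp C h g) = a" "Cod C (Cmp C h g) = b" using homD[OF c] by auto
  show ?thesis unfolding is_zero_arr_def
    apply (rule conjI, rule d(1))
    apply (rule exI[of _ z], rule exI[of _ g], rule exI[of _ h])
    using assms d by simp
qed

lemma zero_arrD:
  assumes "is_zero_arr C f"
  obtains z g h where "is_zero_obj C z" "g \<in> hom C (Dom C f) z" "h \<in> hom C z (Cod C f)" "f = Cmp C h g"
  using assms unfolding is_zero_arr_def by blast

lemma zero_arr_hom: "is_zero_arr C f \<Longrightarrow> f \<in> hom C (Dom C f) (Cod C f)"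
  unfolding is_zero_arr_def hom_def by auto

lemma zero_arr_unique:
  assumes C: "category C" and f: "is_zero_arr C f" "f \<in> hom C a b"
    and g: "is_zero_arr C g" "g \<in> hom C a b"
  shows "f = g"
proof -
  have fd: "Dom C f = a" "Cod C f = b" using homD[OF f(2)] by auto
  obtain z g0 h where z: "is_zero_obj C z" "g0 \<in> hom C a z" "h \<in> hom C z b" "f = Cmp C h g0"
    using zero_arrD[OF f(1)] unfolding fd by blast
  have gd: "Dom C g = a" "Cod C g = b" using homD[OF g(2)] by auto
  obtain z' g0' h' where z': "is_zero_obj C z'" "g0' \<in> hom C a z'" "h' \<in> hom C z' b" "g = Cmp C h' g0'"
    using zero_arrD[OF g(1)] unfolding gd by blast
  obtain k where k: "k \<in> hom C z' z" using zero_init[OF z'(1) zero_obj[OF z(1)]] by blast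
  have e1: "g0 = Cmp C k g0'" using zero_term_uniq[OF C z(1) z(2) cat_comp[OF C z'(2) k]] .
  have e2: "h' = Cmp C h k" using zero_init_uniq[OF C z'(1) z'(3) cat_comp[OF C k z(3)]] .
  show ?thesis using z'(4) z(4) e1 e2 cat_assoc[OF C z'(2) k z(3)] by simp
qed

lemma zero_comp_left:
  assumes C: "category C" and f: "is_zero_arr C f" and g: "g \<in> hom C (Cod C f) c"
  shows "is_zero_arr C (Cmp C g f)"
proof -
  obtain z g0 h where z: "is_zero_obj C z" "g0 \<in> hom C (Dom C f) z" "h \<in> hom C z (Cod C f)" "f = Cmp C h g0"
    using zero_arrD[OF f] by blast
  have "Cmp C g f = Cmp C (Cmp C g h) g0" using cat_assoc[OF C z(2) z(3) g] z(4) by simp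
  moreover have "Cmp C g h \<in> hom C z c" using cat_comp[OF C z(3) g] .
  ultimately show ?thesis using through_zero[OF C z(1) z(2)] by simp
qed

lemma zero_comp_right:
  assumes C: "category C" and f: "is_zero_arr C f" and g: "g \<in> hom C a (Dom C f)"
  shows "is_zero_arr C (Cmp C f g)"
proof -
  obtain z g0 h where z: "is_zero_obj C z" "g0 \<in> hom C (Dom C f) z" "h \<in> hom C z (Cod C f)" "f = Cmp C h g0"
    using zero_arrD[OF f] by blast
  have "Cmp C f g = Cmp C h (Cmp C g0 g)" using cat_assoc[OF C g z(2) z(3)] z(4) by simp
  moreover have "Cmp C g0 g \<in> hom C a z" using cat_comp[OF C g z(2)] .
  ultimately show ?thesis using through_zero[OF C z(1) _ z(3)] by simp
qed

lemma zero_arr_exists: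
  assumes C: "category C" and p: "pointed C" and a: "a \<in> Obj C" and b: "b \<in> Obj C"
  shows "\<exists>f \<in> hom C a b. is_zero_arr C f"
proof -
  obtain z where z: "is_zero_obj C z" using p unfolding pointed_def by blast
  obtain g where g: "g \<in> hom C a z" using zero_term[OF z a] by blast
  obtain h where h: "h \<in> hom C z b" using zero_init[OF z b] by blast
  show ?thesis using through_zero[OF C z g h] cat_comp[OF C g h] by blast
qed

section \<open>Coproducts\<close>

lemma ex1_eq: "\<exists>!x. P x \<Longrightarrow> P a \<Longrightarrow> P b \<Longrightarrow> a = b"
  by blast

lemma coprod_inj: "is_coproduct C I X P \<iota> \<Longrightarrow> i \<in> I \<Longrightarrow> \<iota> i \<in> hom C (X i) P"
  unfolding is_coproduct_def by blast

lemma coprod_obj: "is_coproduct C I X P \<iota> \<Longrightarrow> P \<in> Obj C"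
  unfolding is_coproduct_def by blast

lemma coprod_map:
  assumes cp: "is_coproduct C I X P \<iota>" and Y: "Y \<in> Obj C"
    and f: "\<And>i. i \<in> I \<Longrightarrow> f i \<in> hom C (X i) Y"
  shows "\<exists>!h. h \<in> hom C P Y \<and> (\<forall>i \<in> I. Cmp C h (\<iota> i) = f i)"
proof -
  have U: "\<forall>Y\<in>Obj C. \<forall>f. (\<forall>i\<in>I. f i \<in> hom C (X i) Y) \<longrightarrow>
        (\<exists>!h. h \<in> hom C P Y \<and> (\<forall>i \<in> I. Cmp C h (\<iota> i) = f i))"
    using cp unfolding is_coproduct_def by (elim conjE)
  have "\<forall>i\<in>I. f i \<in> hom C (X i) Y" using f by blast
  then show ?thesis by (rule mp[OF spec[OF bspec[OF U Y], of f]])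
qed

lemma coprod_ext:
  assumes C: "category C" and cp: "is_coproduct C I X P \<iota>"
    and h1: "h1 \<in> hom C P Y" and h2: "h2 \<in> hom C P Y"
    and eq: "\<And>i. i \<in> I \<Longrightarrow> Cmp C h1 (\<iota> i) = Cmp C h2 (\<iota> i)"
  shows "h1 = h2"
proof -
  have Y: "Y \<in> Obj C" using cat_obj_cod[OF C h1] .
  have "\<And>i. i \<in> I \<Longrightarrow> Cmp C h1 (\<iota> i) \<in> hom C (X i) Y"
    using coprod_inj[OF cp] cat_comp[OF C _ h1] by blast
  note U = coprod_map[OF cp Y this]
  show ?thesis
    apply (rule ex1_eq[OF U])
    using h1 h2 eq by auto
qed

lemma coprod_zero:
  assumes C: "category C" and p: "pointed C" and cp: "is_coproduct C I X P \<iota>"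
    and h: "h \<in> hom C P Y"
    and z: "\<And>i. i \<in> I \<Longrightarrow> is_zero_arr C (Cmp C h (\<iota> i))"
    and X: "\<And>i. i \<in> I \<Longrightarrow> X i \<in> Obj C"
  shows "is_zero_arr C h"
proof -
  have P: "P \<in> Obj C" using cp unfolding is_coproduct_def by blast
  obtain z0 where z0: "z0 \<in> hom C P Y" "is_zero_arr C z0"
    using zero_arr_exists[OF C p P cat_obj_cod[OF C h]] by blast
  have "h = z0"
  proof (rule coprod_ext[OF C cp h z0(1)])
    fix i assume i: "i \<in> I"
    have ii: "\<iota> i \<in> hom C (X i) P" using coprod_inj[OF cp i] .
    have "is_zero_arr C (Cmp C z0 (\<iota> i))"
    proof -
      have "Dom C z0 = P" using homD[OF z0(1)] by blast
      then show ?thesis using zero_comp_right[OF C z0(2), of "\<iota> i" "X i"] ii by simp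
    qed
    then show "Cmp C h (\<iota> i) = Cmp C z0 (\<iota> i)"
      using zero_arr_unique[OF C z[OF i] cat_comp[OF C ii h] _ cat_comp[OF C ii z0(1)]] by blast
  qed
  then show ?thesis using z0 by simp
qed

lemma coprod_reindex:
  assumes C: "category C" and fc: "has_finite_coproducts C" and I: "finite I"
    and Y: "\<And>i. i \<in> I \<Longrightarrow> Y i \<in> Obj C"
  shows "\<exists>P \<iota>. is_coproduct C I Y P \<iota>"
proof -
  obtain e where e: "bij_betw e {0..<card I} I" using ex_bij_betw_nat_finite[OF I] by blast
  define n where "n = card I"
  have e': "bij_betw e {..<n} I" using e n_def by (simp add: atLeast0LessThan)
  have "\<forall>i<n. (Y \<circ> e) i \<in> Obj C" using e' Y bij_betwE by fastforce
  then obtain P \<iota>0 where cp: "is_coproduct C {..<n} (Y \<circ> e) P \<iota>0"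
    using fc unfolding has_finite_coproducts_def by blast
  define d where "d = the_inv_into {..<n} e"
  have ed: "\<And>i. i \<in> I \<Longrightarrow> e (d i) = i \<and> d i \<in> {..<n}"
  proof
    fix i assume i: "i \<in> I"
    show "e (d i) = i" unfolding d_def using f_the_inv_into_f_bij_betw[OF e' i] .
    have "bij_betw d I {..<n}" unfolding d_def using bij_betw_the_inv_into[OF e'] .
    then show "d i \<in> {..<n}" using i bij_betwE by blast
  qed
  have de: "\<And>k. k \<in> {..<n} \<Longrightarrow> d (e k) = k"
    unfolding d_def using e' by (meson bij_betw_def the_inv_into_f_f)
  have "is_coproduct C I Y P (\<lambda>i. \<iota>0 (d i))"
    unfolding is_coproduct_def
  proof (intro conjI ballI allI impI)
    show "P \<in> Obj C" using cp unfolding is_coproduct_def by blast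
  next
    fix i assume i: "i \<in> I"
    show "\<iota>0 (d i) \<in> hom C (Y i) P" using coprod_inj[OF cp, of "d i"] ed[OF i] by simp
  next
    fix Z f assume Z: "Z \<in> Obj C" and f: "\<forall>i\<in>I. f i \<in> hom C (Y i) Z"
    have f': "\<And>k. k \<in> {..<n} \<Longrightarrow> (f \<circ> e) k \<in> hom C ((Y \<circ> e) k) Z"
      using f e' bij_betwE by fastforce
    obtain h where h: "h \<in> hom C P Z" "\<forall>k\<in>{..<n}. Cmp C h (\<iota>0 k) = (f \<circ> e) k"
      using coprod_map[OF cp Z f'] by blast
    have hI: "\<forall>i\<in>I. Cmp C h (\<iota>0 (d i)) = f i" using h(2) ed by fastforce
    show "\<exists>!h. h \<in> hom C P Z \<and> (\<forall>i\<in>I. Cmp C h (\<iota>0 (d i)) = f i)"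
    proof (rule ex1I[of _ h])
      show "h \<in> hom C P Z \<and> (\<forall>i\<in>I. Cmp C h (\<iota>0 (d i)) = f i)" using h hI by blast
    next
      fix h' assume h': "h' \<in> hom C P Z \<and> (\<forall>i\<in>I. Cmp C h' (\<iota>0 (d i)) = f i)"
      have "\<forall>k\<in>{..<n}. Cmp C h' (\<iota>0 k) = (f \<circ> e) k"
      proof
        fix k assume k: "k \<in> {..<n}"
        have "e k \<in> I" using e' k bij_betwE by blast
        then show "Cmp C h' (\<iota>0 k) = (f \<circ> e) k" using h' de[OF k] by (metis comp_apply)
      qed
      then show "h' = h" using coprod_map[OF cp Z f'] h h' by blast
    qed
  qed
  then show ?thesis by blast
qed

section \<open>Cokernels\<close>

lemma coker_zero: "is_cokernel C f q \<Longrightarrow> is_zero_arr C (Cmp C q f)"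
  unfolding is_cokernel_def by blast

lemma coker_hom: "is_cokernel C f q \<Longrightarrow> q \<in> hom C (Cod C f) (Cod C q)"
  unfolding is_cokernel_def hom_def by blast

lemma coker_univ:
  assumes ck: "is_cokernel C f q" and g: "g \<in> hom C (Cod C f) Y" and z: "is_zero_arr C (Cmp C g f)"
  shows "\<exists>!h. h \<in> hom C (Cod C q) Y \<and> Cmp C h q = g"
proof -
  have U: "\<forall>g \<in> Arr C. Dom C g = Cod C f \<and> is_zero_arr C (Cmp C g f) \<longrightarrow>
        (\<exists>!h. h \<in> hom C (Cod C q) (Cod C g) \<and> Cmp C h q = g)"
    using ck unfolding is_cokernel_def by (elim conjE)
  have gg: "g \<in> Arr C" "Dom C g = Cod C f" "Cod C g = Y" using homD[OF g] by auto
  have "\<exists>!h. h \<in> hom C (Cod C q) (Cod C g) \<and> Cmp C h q = g"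
    using mp[OF bspec[OF U gg(1)]] gg(2) z by blast
  then show ?thesis unfolding gg(3) .
qed

lemma coker_epi:
  assumes C: "category C" and ck: "is_cokernel C f q"
    and h1: "h1 \<in> hom C (Cod C q) Y" and h2: "h2 \<in> hom C (Cod C q) Y"
    and eq: "Cmp C h1 q = Cmp C h2 q"
  shows "h1 = h2"
proof -
  have "f \<in> Arr C" using ck unfolding is_cokernel_def by (elim conjE)
  then have f: "f \<in> hom C (Dom C f) (Cod C f)" by (rule arr_hom)
  have q: "q \<in> hom C (Cod C f) (Cod C q)" using coker_hom[OF ck] .
  have g: "Cmp C h1 q \<in> hom C (Cod C f) Y" using cat_comp[OF C q h1] .
  have "Cmp C (Cmp C h1 q) f = Cmp C h1 (Cmp C q f)" using cat_assoc[OF C f q h1] by simp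
  moreover have "is_zero_arr C (Cmp C h1 (Cmp C q f))"
  proof -
    have "Cod C (Cmp C q f) = Cod C q" using homD[OF cat_comp[OF C f q]] by blast
    then show ?thesis using zero_comp_left[OF C coker_zero[OF ck], of h1 Y] h1 by simp
  qed
  ultimately have z: "is_zero_arr C (Cmp C (Cmp C h1 q) f)" by simp
  show ?thesis
    apply (rule ex1_eq[OF coker_univ[OF ck g z]])
    using h1 h2 eq by auto
qed

lemma coker_factor:
  assumes ck: "is_cokernel C f q" and g: "g \<in> hom C (Cod C f) Y" and z: "is_zero_arr C (Cmp C g f)"
  shows "\<exists>h \<in> hom C (Cod C q) Y. Cmp C h q = g"
  using coker_univ[OF ck g z] by blast

lemma coker_iso:
  assumes C: "category C" and ck: "is_cokernel C f q"
    and \<phi>: "\<phi> \<in> hom C (Cod C q) r" and \<psi>: "\<psi> \<in> hom C r (Cod C q)"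
    and i1: "Cmp C \<psi> \<phi> = Idm C (Cod C q)" and i2: "Cmp C \<phi> \<psi> = Idm C r"
  shows "is_cokernel C f (Cmp C \<phi> q)"
proof -
  have "f \<in> Arr C" using ck unfolding is_cokernel_def by (elim conjE)
  then have f: "f \<in> hom C (Dom C f) (Cod C f)" by (rule arr_hom)
  have q: "q \<in> hom C (Cod C f) (Cod C q)" using coker_hom[OF ck] .
  have u: "Cmp C \<phi> q \<in> hom C (Cod C f) r" using cat_comp[OF C q \<phi>] .
  have ud: "Cmp C \<phi> q \<in> Arr C" "Dom C (Cmp C \<phi> q) = Cod C f" "Cod C (Cmp C \<phi> q) = r"
    using homD[OF u] by auto
  have z: "is_zero_arr C (Cmp C (Cmp C \<phi> q) f)"
  proof -
    have "Cod C (Cmp C q f) = Cod C q" using homD[OF cat_comp[OF C f q]] by blast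
    then have "is_zero_arr C (Cmp C \<phi> (Cmp C q f))"
      using zero_comp_left[OF C coker_zero[OF ck], of \<phi> r] \<phi> by simp
    then show ?thesis using cat_assoc[OF C f q \<phi>] by simp
  qed
  have main: "\<exists>!h. h \<in> hom C (Cod C (Cmp C \<phi> q)) (Cod C g) \<and> Cmp C h (Cmp C \<phi> q) = g"
    if g: "g \<in> Arr C" "Dom C g = Cod C f" "is_zero_arr C (Cmp C g f)" for g
  proof -
    have g': "g \<in> hom C (Cod C f) (Cod C g)" using homI[OF g(1) g(2)] by simp
    obtain h where h: "h \<in> hom C (Cod C q) (Cod C g)" "Cmp C h q = g"
      using coker_factor[OF ck g' g(3)] by blast
    have hp: "Cmp C h \<psi> \<in> hom C r (Cod C g)" using cat_comp[OF C \<psi> h(1)] .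
    show ?thesis unfolding ud(3)
    proof (rule ex1I[of _ "Cmp C h \<psi>"])
      have "Cmp C (Cmp C h \<psi>) (Cmp C \<phi> q) = Cmp C (Cmp C (Cmp C h \<psi>) \<phi>) q"
        using cat_assoc[OF C q \<phi> hp] .
      also have "Cmp C (Cmp C h \<psi>) \<phi> = Cmp C h (Cmp C \<psi> \<phi>)"
        using cat_assoc[OF C \<phi> \<psi> h(1)] by simp
      also have "\<dots> = h" using i1 cat_idr[OF C h(1)] by simp
      finally show "Cmp C h \<psi> \<in> hom C r (Cod C g) \<and> Cmp C (Cmp C h \<psi>) (Cmp C \<phi> q) = g"
        using hp h(2) by simp
    next
      fix h' assume h': "h' \<in> hom C r (Cod C g) \<and> Cmp C h' (Cmp C \<phi> q) = g"
      have h'r: "h' \<in> hom C r (Cod C g)" using h' by blast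
      have "Cmp C (Cmp C h' \<phi>) q = g" using h' cat_assoc[OF C q \<phi> h'r] by simp
      then have e: "Cmp C h' \<phi> = h" using coker_epi[OF C ck cat_comp[OF C \<phi> h'r] h(1)] h(2) by simp
      have "h' = Cmp C h' (Cmp C \<phi> \<psi>)" using i2 cat_idr[OF C h'r] by simp
      also have "\<dots> = Cmp C (Cmp C h' \<phi>) \<psi>" using cat_assoc[OF C \<psi> \<phi> h'r] .
      finally show "h' = Cmp C h \<psi>" using e by simp
    qed
  qed
  show ?thesis unfolding is_cokernel_def
    using \<open>f \<in> Arr C\<close> ud(1,2) z main by blast
qed

section \<open>Reflections\<close>

lemma reflection_iso:
  assumes C: "category C" and r1: "is_reflection C D c r u" and r2: "is_reflection C D c r' u'"
  shows "\<exists>\<phi> \<psi>. \<phi> \<in> hom C r r' \<and> \<psi> \<in> hom C r' r \<and> Cmp C \<psi> \<phi> = Idm C r \<and> Cmp C \<phi> \<psi> = Idm C r'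
          \<and> Cmp C \<phi> u = u'"
proof -
  have u: "u \<in> hom C c r" "r \<in> D" and u': "u' \<in> hom C c r'" "r' \<in> D"
    using r1 r2 unfolding is_reflection_def by blast+
  obtain \<phi> where \<phi>: "\<phi> \<in> hom C r r'" "Cmp C \<phi> u = u'" using r1 u' unfolding is_reflection_def by blast
  obtain \<psi> where \<psi>: "\<psi> \<in> hom C r' r" "Cmp C \<psi> u' = u" using r2 u unfolding is_reflection_def by blast
  have U1: "\<exists>!g. g \<in> hom C r r \<and> Cmp C g u = u" using r1 u unfolding is_reflection_def by blast
  have U2: "\<exists>!g. g \<in> hom C r' r' \<and> Cmp C g u' = u'" using r2 u' unfolding is_reflection_def by blast
  have rO: "r \<in> Obj C" "r' \<in> Obj C" using cat_obj_cod[OF C] u u' by blast+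
  have "Cmp C (Cmp C \<psi> \<phi>) u = u" using cat_assoc[OF C u(1) \<phi>(1) \<psi>(1)] \<phi> \<psi> by simp
  moreover have "Cmp C (Idm C r) u = u" using cat_idl[OF C u(1)] .
  ultimately have 1: "Cmp C \<psi> \<phi> = Idm C r" using U1 cat_comp[OF C \<phi>(1) \<psi>(1)] cat_id[OF C rO(1)] by blast
  have "Cmp C (Cmp C \<phi> \<psi>) u' = u'" using cat_assoc[OF C u'(1) \<psi>(1) \<phi>(1)] \<phi> \<psi> by simp
  moreover have "Cmp C (Idm C r') u' = u'" using cat_idl[OF C u'(1)] .
  ultimately have 2: "Cmp C \<phi> \<psi> = Idm C r'" using U2 cat_comp[OF C \<psi>(1) \<phi>(1)] cat_id[OF C rO(2)] by blast
  show ?thesis using 1 2 \<phi> \<psi> by blast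
qed


lemma categoryI:
  assumes a1: "\<And>f. f \<in> Arr C \<Longrightarrow> Dom C f \<in> Obj C \<and> Cod C f \<in> Obj C"
    and a2: "\<And>a. a \<in> Obj C \<Longrightarrow> Idm C a \<in> hom C a a"
    and a3: "\<And>f g a b c. f \<in> hom C a b \<Longrightarrow> g \<in> hom C b c \<Longrightarrow> Cmp C g f \<in> hom C a c"
    and a4: "\<And>f a b. f \<in> hom C a b \<Longrightarrow> Cmp C (Idm C b) f = f \<and> Cmp C f (Idm C a) = f"
    and a5: "\<And>f g h a b c d. f \<in> hom C a b \<Longrightarrow> g \<in> hom C b c \<Longrightarrow> h \<in> hom C c d
              \<Longrightarrow> Cmp C h (Cmp C g f) = Cmp C (Cmp C h g) f"
  shows "category C"
  unfolding category_def
proof (intro conjI ballI impI)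
  fix f assume f: "f \<in> Arr C"
  show "Dom C f \<in> Obj C" "Cod C f \<in> Obj C" using a1[OF f] by auto
  show "Cmp C (Idm C (Cod C f)) f = f" "Cmp C f (Idm C (Dom C f)) = f" using a4[OF arr_hom[OF f]] by auto
next
  fix a assume "a \<in> Obj C" then show "Idm C a \<in> hom C a a" by (rule a2)
next
  fix f g assume f: "f \<in> Arr C" and g: "g \<in> Arr C" and e: "Cod C f = Dom C g"
  show "Cmp C g f \<in> hom C (Dom C f) (Cod C g)"
    using a3[OF arr_hom[OF f], of g "Cod C g"] arr_hom[OF g] e by simp
next
  fix f g h assume f: "f \<in> Arr C" and g: "g \<in> Arr C" and h: "h \<in> Arr C"
    and e: "Cod C f = Dom C g \<and> Cod C g = Dom C h"
  show "Cmp C h (Cmp C g f) = Cmp C (Cmp C h g) f"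
    using a5[OF arr_hom[OF f], of g "Cod C g" h "Cod C h"] arr_hom[OF g] arr_hom[OF h] e by simp
qed

section \<open>Functors and natural transformations\<close>

lemma fun_obj: "is_functor T A F \<Longrightarrow> x \<in> Obj T \<Longrightarrow> fst F x \<in> Obj A"
  unfolding is_functor_def by blast
lemma fun_arr: "is_functor T A F \<Longrightarrow> f \<in> hom T x y \<Longrightarrow> snd F f \<in> hom A (fst F x) (fst F y)"
proof -
  assume F: "is_functor T A F" and f: "f \<in> hom T x y"
  have "\<forall>f \<in> Arr T. snd F f \<in> hom A (fst F (Dom T f)) (fst F (Cod T f))"
    using F unfolding is_functor_def by (elim conjE)
  then show ?thesis using homD[OF f] by auto
qed
lemma fun_id: "is_functor T A F \<Longrightarrow> x \<in> Obj T \<Longrightarrow> snd F (Idm T x) = Idm A (fst F x)"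
  unfolding is_functor_def by blast
lemma fun_comp: "is_functor T A F \<Longrightarrow> f \<in> hom T x y \<Longrightarrow> g \<in> hom T y z
   \<Longrightarrow> snd F (Cmp T g f) = Cmp A (snd F g) (snd F f)"
proof -
  assume F: "is_functor T A F" and f: "f \<in> hom T x y" and g: "g \<in> hom T y z"
  have "\<forall>f \<in> Arr T. \<forall>g \<in> Arr T. Cod T f = Dom T g \<longrightarrow>
        snd F (Cmp T g f) = Cmp A (snd F g) (snd F f)"
    using F unfolding is_functor_def by (elim conjE)
  then show ?thesis using homD[OF f] homD[OF g] by auto
qed
lemma fun_undef_obj: "is_functor T A F \<Longrightarrow> x \<notin> Obj T \<Longrightarrow> fst F x = undefined"
  unfolding is_functor_def by blast
lemma fun_undef_arr: "is_functor T A F \<Longrightarrow> f \<notin> Arr T \<Longrightarrow> snd F f = undefined"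
  unfolding is_functor_def by blast

lemma functorI:
  assumes "\<And>x. x \<in> Obj T \<Longrightarrow> fst F x \<in> Obj A"
    and "\<And>f x y. f \<in> hom T x y \<Longrightarrow> snd F f \<in> hom A (fst F x) (fst F y)"
    and "\<And>x. x \<in> Obj T \<Longrightarrow> snd F (Idm T x) = Idm A (fst F x)"
    and "\<And>f g x y z. f \<in> hom T x y \<Longrightarrow> g \<in> hom T y z \<Longrightarrow>
            snd F (Cmp T g f) = Cmp A (snd F g) (snd F f)"
    and "\<And>x. x \<notin> Obj T \<Longrightarrow> fst F x = undefined"
    and "\<And>f. f \<notin> Arr T \<Longrightarrow> snd F f = undefined"
  shows "is_functor T A F"
  unfolding is_functor_def
proof (intro conjI ballI allI impI)
  fix f assume f: "f \<in> Arr T"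
  show "snd F f \<in> hom A (fst F (Dom T f)) (fst F (Cod T f))" using assms(2)[OF arr_hom[OF f]] .
next
  fix f g assume f: "f \<in> Arr T" and g: "g \<in> Arr T" and e: "Cod T f = Dom T g"
  show "snd F (Cmp T g f) = Cmp A (snd F g) (snd F f)"
    using assms(4)[OF arr_hom[OF f], of g "Cod T g"] arr_hom[OF g] e by simp
qed (use assms in auto)

lemma nt_functors: "nat_trans T A F G \<eta> \<Longrightarrow> is_functor T A F \<and> is_functor T A G"
  unfolding nat_trans_def by blast
lemma nt_comp: "nat_trans T A F G \<eta> \<Longrightarrow> x \<in> Obj T \<Longrightarrow> \<eta> x \<in> hom A (fst F x) (fst G x)"
  unfolding nat_trans_def by blast
lemma nt_nat: "nat_trans T A F G \<eta> \<Longrightarrow> f \<in> hom T x y \<Longrightarrow>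
   Cmp A (\<eta> y) (snd F f) = Cmp A (snd G f) (\<eta> x)"
proof -
  assume n: "nat_trans T A F G \<eta>" and f: "f \<in> hom T x y"
  have "\<forall>f \<in> Arr T. Cmp A (\<eta> (Cod T f)) (snd F f) = Cmp A (snd G f) (\<eta> (Dom T f))"
    using n unfolding nat_trans_def by (elim conjE)
  then show ?thesis using homD[OF f] by auto
qed
lemma nt_undef: "nat_trans T A F G \<eta> \<Longrightarrow> x \<notin> Obj T \<Longrightarrow> \<eta> x = undefined"
  unfolding nat_trans_def by blast

lemma nat_transI:
  assumes "is_functor T A F" "is_functor T A G"
    and "\<And>x. x \<in> Obj T \<Longrightarrow> \<eta> x \<in> hom A (fst F x) (fst G x)"
    and "\<And>f x y. f \<in> hom T x y \<Longrightarrow> Cmp A (\<eta> y) (snd F f) = Cmp A (snd G f) (\<eta> x)"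
    and "\<And>x. x \<notin> Obj T \<Longrightarrow> \<eta> x = undefined"
  shows "nat_trans T A F G \<eta>"
  unfolding nat_trans_def
proof (intro conjI ballI allI impI)
  fix f assume f: "f \<in> Arr T"
  show "Cmp A (\<eta> (Cod T f)) (snd F f) = Cmp A (snd G f) (\<eta> (Dom T f))"
    using assms(4)[OF arr_hom[OF f]] .
qed (use assms in auto)

lemma nt_eqI:
  assumes "nat_trans T A F G \<eta>" "nat_trans T A F G \<theta>" "\<And>x. x \<in> Obj T \<Longrightarrow> \<eta> x = \<theta> x"
  shows "\<eta> = \<theta>"
proof
  fix x show "\<eta> x = \<theta> x"
  proof (cases "x \<in> Obj T")
    case True then show ?thesis using assms(3) by blast
  next
    case False then show ?thesis using nt_undef[OF assms(1) False] nt_undef[OF assms(2) False] by simp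
  qed
qed

section \<open>The functor category\<close>

lemma funcat_Obj: "Obj (funcat A T) = {F. is_functor T A F}" by (simp add: funcat_def)
lemma funcat_Arr: "Arr (funcat A T) = {(F, G, \<eta>). nat_trans T A F G \<eta>}" by (simp add: funcat_def)
lemma funcat_Dom: "Dom (funcat A T) (F, G, \<eta>) = F" by (simp add: funcat_def)
lemma funcat_Cod: "Cod (funcat A T) (F, G, \<eta>) = G" by (simp add: funcat_def)
lemma funcat_Idm: "Idm (funcat A T) F = (F, F, (\<lambda>x \<in> Obj T. Idm A (fst F x)))" by (simp add: funcat_def)
lemma funcat_Cmp: "Cmp (funcat A T) (G', H, \<theta>) (F, G, \<eta>) = (F, H, (\<lambda>x \<in> Obj T. Cmp A (\<theta> x) (\<eta> x)))"
  by (simp add: funcat_def)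

lemma funcat_hom: "a \<in> hom (funcat A T) F G \<longleftrightarrow> (\<exists>\<eta>. a = (F, G, \<eta>) \<and> nat_trans T A F G \<eta>)"
proof (cases a)
  case (fields F' G' \<eta>)
  then show ?thesis unfolding hom_def by (auto simp: funcat_Arr funcat_Dom funcat_Cod)
qed

lemma funcat_homI: "nat_trans T A F G \<eta> \<Longrightarrow> (F, G, \<eta>) \<in> hom (funcat A T) F G"
  using funcat_hom by blast

lemma nt_id:
  assumes A: "category A" and T: "category T" and F: "is_functor T A F"
  shows "nat_trans T A F F (\<lambda>x \<in> Obj T. Idm A (fst F x))"
proof (rule nat_transI[OF F F])
  fix x assume "x \<in> Obj T"
  then show "(\<lambda>x \<in> Obj T. Idm A (fst F x)) x \<in> hom A (fst F x) (fst F x)"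
    using cat_id[OF A fun_obj[OF F]] by simp
next
  fix f x y assume f: "f \<in> hom T x y"
  have x: "x \<in> Obj T" and y: "y \<in> Obj T" using cat_obj_dom[OF T f] cat_obj_cod[OF T f] by auto
  show "Cmp A ((\<lambda>x \<in> Obj T. Idm A (fst F x)) y) (snd F f) = Cmp A (snd F f) ((\<lambda>x \<in> Obj T. Idm A (fst F x)) x)"
    using x y cat_idl[OF A fun_arr[OF F f]] cat_idr[OF A fun_arr[OF F f]] by simp
qed simp

lemma nt_vcomp:
  assumes A: "category A" and T: "category T"
    and n1: "nat_trans T A F G \<eta>" and n2: "nat_trans T A G H \<theta>"
  shows "nat_trans T A F H (\<lambda>x \<in> Obj T. Cmp A (\<theta> x) (\<eta> x))"
proof (rule nat_transI)
  show "is_functor T A F" using nt_functors[OF n1] by blast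
  show "is_functor T A H" using nt_functors[OF n2] by blast
next
  fix x assume x: "x \<in> Obj T"
  show "(\<lambda>x \<in> Obj T. Cmp A (\<theta> x) (\<eta> x)) x \<in> hom A (fst F x) (fst H x)"
    using x cat_comp[OF A nt_comp[OF n1 x] nt_comp[OF n2 x]] by simp
next
  fix f x y assume f: "f \<in> hom T x y"
  have x: "x \<in> Obj T" and y: "y \<in> Obj T" using cat_obj_dom[OF T f] cat_obj_cod[OF T f] by auto
  have F: "is_functor T A F" and G: "is_functor T A G" and H: "is_functor T A H"
    using nt_functors[OF n1] nt_functors[OF n2] by auto
  note Ff = fun_arr[OF F f] and Gf = fun_arr[OF G f] and Hf = fun_arr[OF H f]
  note ex = nt_comp[OF n1 x] and ey = nt_comp[OF n1 y] and tx = nt_comp[OF n2 x] and ty = nt_comp[OF n2 y]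
  have "Cmp A (Cmp A (\<theta> y) (\<eta> y)) (snd F f) = Cmp A (\<theta> y) (Cmp A (\<eta> y) (snd F f))"
    using cat_assoc[OF A Ff ey ty] by simp
  also have "\<dots> = Cmp A (\<theta> y) (Cmp A (snd G f) (\<eta> x))" using nt_nat[OF n1 f] by simp
  also have "\<dots> = Cmp A (Cmp A (\<theta> y) (snd G f)) (\<eta> x)" using cat_assoc[OF A ex Gf ty] .
  also have "\<dots> = Cmp A (Cmp A (snd H f) (\<theta> x)) (\<eta> x)" using nt_nat[OF n2 f] by simp
  also have "\<dots> = Cmp A (snd H f) (Cmp A (\<theta> x) (\<eta> x))" using cat_assoc[OF A ex tx Hf] by simp
  finally show "Cmp A ((\<lambda>x \<in> Obj T. Cmp A (\<theta> x) (\<eta> x)) y) (snd F f) =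
      Cmp A (snd H f) ((\<lambda>x \<in> Obj T. Cmp A (\<theta> x) (\<eta> x)) x)" using x y by simp
qed simp

lemma funcat_homE:
  assumes "a \<in> hom (funcat A T) F G"
  obtains \<eta> where "a = (F, G, \<eta>)" "nat_trans T A F G \<eta>"
  using assms funcat_hom by blast

lemma funcat_category:
  assumes A: "category A" and T: "category T"
  shows "category (funcat A T)"
proof (rule categoryI)
  fix f assume "f \<in> Arr (funcat A T)"
  then obtain F G \<eta> where f: "f = (F, G, \<eta>)" "nat_trans T A F G \<eta>"
    unfolding funcat_Arr by blast
  then show "Dom (funcat A T) f \<in> Obj (funcat A T) \<and> Cod (funcat A T) f \<in> Obj (funcat A T)"
    using nt_functors[OF f(2)] by (simp add: funcat_Obj funcat_Dom funcat_Cod)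
next
  fix F assume "F \<in> Obj (funcat A T)"
  then have F: "is_functor T A F" by (simp add: funcat_Obj)
  show "Idm (funcat A T) F \<in> hom (funcat A T) F F"
    unfolding funcat_Idm by (rule funcat_homI[OF nt_id[OF A T F]])
next
  fix f g F G H assume f: "f \<in> hom (funcat A T) F G" and g: "g \<in> hom (funcat A T) G H"
  obtain \<eta> where e: "f = (F, G, \<eta>)" "nat_trans T A F G \<eta>" using funcat_homE[OF f] .
  obtain \<theta> where t: "g = (G, H, \<theta>)" "nat_trans T A G H \<theta>" using funcat_homE[OF g] .
  show "Cmp (funcat A T) g f \<in> hom (funcat A T) F H"
    unfolding e t funcat_Cmp by (rule funcat_homI[OF nt_vcomp[OF A T e(2) t(2)]])
next
  fix f F G assume f: "f \<in> hom (funcat A T) F G"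
  obtain \<eta> where e: "f = (F, G, \<eta>)" "nat_trans T A F G \<eta>" using funcat_homE[OF f] .
  have l: "(\<lambda>x \<in> Obj T. Cmp A ((\<lambda>x \<in> Obj T. Idm A (fst G x)) x) (\<eta> x)) = \<eta>"
  proof
    fix x show "(\<lambda>x \<in> Obj T. Cmp A ((\<lambda>x \<in> Obj T. Idm A (fst G x)) x) (\<eta> x)) x = \<eta> x"
      using cat_idl[OF A nt_comp[OF e(2)]] nt_undef[OF e(2)] by (cases "x \<in> Obj T") auto
  qed
  have r: "(\<lambda>x \<in> Obj T. Cmp A (\<eta> x) ((\<lambda>x \<in> Obj T. Idm A (fst F x)) x)) = \<eta>"
  proof
    fix x show "(\<lambda>x \<in> Obj T. Cmp A (\<eta> x) ((\<lambda>x \<in> Obj T. Idm A (fst F x)) x)) x = \<eta> x"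
      using cat_idr[OF A nt_comp[OF e(2)]] nt_undef[OF e(2)] by (cases "x \<in> Obj T") auto
  qed
  show "Cmp (funcat A T) (Idm (funcat A T) G) f = f \<and> Cmp (funcat A T) f (Idm (funcat A T) F) = f"
    unfolding e funcat_Idm funcat_Cmp l r by simp
next
  fix f g h F G H K assume f: "f \<in> hom (funcat A T) F G" and g: "g \<in> hom (funcat A T) G H"
    and h: "h \<in> hom (funcat A T) H K"
  obtain \<eta> where e: "f = (F, G, \<eta>)" "nat_trans T A F G \<eta>" using funcat_homE[OF f] .
  obtain \<theta> where t: "g = (G, H, \<theta>)" "nat_trans T A G H \<theta>" using funcat_homE[OF g] .
  obtain \<kappa> where k: "h = (H, K, \<kappa>)" "nat_trans T A H K \<kappa>" using funcat_homE[OF h] .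
  have "(\<lambda>x \<in> Obj T. Cmp A (\<kappa> x) ((\<lambda>x \<in> Obj T. Cmp A (\<theta> x) (\<eta> x)) x)) =
        (\<lambda>x \<in> Obj T. Cmp A ((\<lambda>x \<in> Obj T. Cmp A (\<kappa> x) (\<theta> x)) x) (\<eta> x))"
  proof
    fix x show "(\<lambda>x \<in> Obj T. Cmp A (\<kappa> x) ((\<lambda>x \<in> Obj T. Cmp A (\<theta> x) (\<eta> x)) x)) x =
        (\<lambda>x \<in> Obj T. Cmp A ((\<lambda>x \<in> Obj T. Cmp A (\<kappa> x) (\<theta> x)) x) (\<eta> x)) x"
      using cat_assoc[OF A nt_comp[OF e(2)] nt_comp[OF t(2)] nt_comp[OF k(2)]] by (cases "x \<in> Obj T") auto
  qed
  then show "Cmp (funcat A T) h (Cmp (funcat A T) g f) = Cmp (funcat A T) (Cmp (funcat A T) h g) f"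
    unfolding e t k funcat_Cmp by simp
qed


definition Zf :: "('to,'tm) cat \<Rightarrow> ('ao,'am) cat \<Rightarrow> 'ao \<Rightarrow> ('to,'tm,'ao,'am) ftor" where
  "Zf T A z = ((\<lambda>x \<in> Obj T. z), (\<lambda>f \<in> Arr T. Idm A z))"

lemma Zf_functor:
  assumes A: "category A" and T: "category T" and z: "is_zero_obj A z"
  shows "is_functor T A (Zf T A z)"
proof (rule functorI)
  have zO: "z \<in> Obj A" using zero_obj[OF z] .
  show "\<And>x. x \<in> Obj T \<Longrightarrow> fst (Zf T A z) x \<in> Obj A" using zO by (simp add: Zf_def)
  show "\<And>f x y. f \<in> hom T x y \<Longrightarrow> snd (Zf T A z) f \<in> hom A (fst (Zf T A z) x) (fst (Zf T A z) y)"
  proof -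
    fix f x y assume f: "f \<in> hom T x y"
    have "x \<in> Obj T" "y \<in> Obj T" "f \<in> Arr T" using cat_obj_dom[OF T f] cat_obj_cod[OF T f] homD[OF f] by auto
    then show "snd (Zf T A z) f \<in> hom A (fst (Zf T A z) x) (fst (Zf T A z) y)"
      using cat_id[OF A zO] by (simp add: Zf_def)
  qed
  show "\<And>x. x \<in> Obj T \<Longrightarrow> snd (Zf T A z) (Idm T x) = Idm A (fst (Zf T A z) x)"
    using cat_id[OF T] homD by (fastforce simp: Zf_def)
  show "\<And>f g x y w. f \<in> hom T x y \<Longrightarrow> g \<in> hom T y w \<Longrightarrow>
            snd (Zf T A z) (Cmp T g f) = Cmp A (snd (Zf T A z) g) (snd (Zf T A z) f)"
  proof -
    fix f g x y w assume f: "f \<in> hom T x y" and g: "g \<in> hom T y w"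
    have "Cmp T g f \<in> Arr T" "f \<in> Arr T" "g \<in> Arr T" using homD[OF cat_comp[OF T f g]] homD[OF f] homD[OF g] by auto
    then show "snd (Zf T A z) (Cmp T g f) = Cmp A (snd (Zf T A z) g) (snd (Zf T A z) f)"
      using cat_idl[OF A cat_id[OF A zO]] by (simp add: Zf_def)
  qed
qed (auto simp: Zf_def)

lemma Zf_zero:
  assumes A: "category A" and T: "category T" and z: "is_zero_obj A z"
  shows "is_zero_obj (funcat A T) (Zf T A z)"
proof -
  let ?Z = "Zf T A z"
  have Z: "is_functor T A ?Z" using Zf_functor[OF A T z] .
  have fZ: "\<And>x. x \<in> Obj T \<Longrightarrow> fst ?Z x = z" by (simp add: Zf_def)
  have sZ: "\<And>f. f \<in> Arr T \<Longrightarrow> snd ?Z f = Idm A z" by (simp add: Zf_def)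
  have zO: "z \<in> Obj A" using zero_obj[OF z] .
  have init: "\<exists>!a. a \<in> hom (funcat A T) ?Z G" if G: "is_functor T A G" for G
  proof -
    define \<eta> where "\<eta> = (\<lambda>x \<in> Obj T. THE f. f \<in> hom A z (fst G x))"
    have \<eta>h: "\<eta> x \<in> hom A z (fst G x)" if x: "x \<in> Obj T" for x
      using theI'[OF zero_init[OF z fun_obj[OF G x]]] x by (simp add: \<eta>_def)
    have nt: "nat_trans T A ?Z G \<eta>"
    proof (rule nat_transI[OF Z G])
      show "\<And>x. x \<in> Obj T \<Longrightarrow> \<eta> x \<in> hom A (fst ?Z x) (fst G x)" using \<eta>h fZ by simp
      fix f x y assume f: "f \<in> hom T x y"
      have x: "x \<in> Obj T" and y: "y \<in> Obj T" using cat_obj_dom[OF T f] cat_obj_cod[OF T f] by auto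
      have fa: "f \<in> Arr T" using homD[OF f] by blast
      have "Cmp A (\<eta> y) (snd ?Z f) \<in> hom A z (fst G y)"
        using cat_comp[OF A cat_id[OF A zO] \<eta>h[OF y]] sZ[OF fa] by simp
      moreover have "Cmp A (snd G f) (\<eta> x) \<in> hom A z (fst G y)"
        using cat_comp[OF A \<eta>h[OF x] fun_arr[OF G f]] .
      ultimately show "Cmp A (\<eta> y) (snd ?Z f) = Cmp A (snd G f) (\<eta> x)"
        using zero_init_uniq[OF A z] by blast
    qed (simp add: \<eta>_def)
    show ?thesis
    proof (rule ex1I[of _ "(?Z, G, \<eta>)"])
      show "(?Z, G, \<eta>) \<in> hom (funcat A T) ?Z G" using funcat_homI[OF nt] .
    next
      fix a assume "a \<in> hom (funcat A T) ?Z G"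
      then obtain \<eta>' where a: "a = (?Z, G, \<eta>')" "nat_trans T A ?Z G \<eta>'" by (rule funcat_homE)
      have "\<eta>' = \<eta>"
      proof (rule nt_eqI[OF a(2) nt])
        fix x assume x: "x \<in> Obj T"
        show "\<eta>' x = \<eta> x" using zero_init_uniq[OF A z _ \<eta>h[OF x]] nt_comp[OF a(2) x] fZ[OF x] by simp
      qed
      then show "a = (?Z, G, \<eta>)" using a by simp
    qed
  qed
  have trm: "\<exists>!a. a \<in> hom (funcat A T) G ?Z" if G: "is_functor T A G" for G
  proof -
    define \<eta> where "\<eta> = (\<lambda>x \<in> Obj T. THE f. f \<in> hom A (fst G x) z)"
    have \<eta>h: "\<eta> x \<in> hom A (fst G x) z" if x: "x \<in> Obj T" for x
      using theI'[OF zero_term[OF z fun_obj[OF G x]]] x by (simp add: \<eta>_def)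
    have nt: "nat_trans T A G ?Z \<eta>"
    proof (rule nat_transI[OF G Z])
      show "\<And>x. x \<in> Obj T \<Longrightarrow> \<eta> x \<in> hom A (fst G x) (fst ?Z x)" using \<eta>h fZ by simp
      fix f x y assume f: "f \<in> hom T x y"
      have x: "x \<in> Obj T" and y: "y \<in> Obj T" using cat_obj_dom[OF T f] cat_obj_cod[OF T f] by auto
      have fa: "f \<in> Arr T" using homD[OF f] by blast
      have "Cmp A (\<eta> y) (snd G f) \<in> hom A (fst G x) z"
        using cat_comp[OF A fun_arr[OF G f] \<eta>h[OF y]] .
      moreover have "Cmp A (snd ?Z f) (\<eta> x) \<in> hom A (fst G x) z"
        using cat_comp[OF A \<eta>h[OF x] cat_id[OF A zO]] sZ[OF fa] by simp
      ultimately show "Cmp A (\<eta> y) (snd G f) = Cmp A (snd ?Z f) (\<eta> x)"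
        using zero_term_uniq[OF A z] by blast
    qed (simp add: \<eta>_def)
    show ?thesis
    proof (rule ex1I[of _ "(G, ?Z, \<eta>)"])
      show "(G, ?Z, \<eta>) \<in> hom (funcat A T) G ?Z" using funcat_homI[OF nt] .
    next
      fix a assume "a \<in> hom (funcat A T) G ?Z"
      then obtain \<eta>' where a: "a = (G, ?Z, \<eta>')" "nat_trans T A G ?Z \<eta>'" by (rule funcat_homE)
      have "\<eta>' = \<eta>"
      proof (rule nt_eqI[OF a(2) nt])
        fix x assume x: "x \<in> Obj T"
        show "\<eta>' x = \<eta> x" using zero_term_uniq[OF A z _ \<eta>h[OF x]] nt_comp[OF a(2) x] fZ[OF x] by simp
      qed
      then show "a = (G, ?Z, \<eta>)" using a by simp
    qed
  qed
  show ?thesis unfolding is_zero_obj_def is_initial_def is_terminal_def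
    using init trm Z by (simp add: funcat_Obj)
qed

lemma funcat_zero_pointwise:
  assumes A: "category A" and T: "category T" and p: "pointed A"
    and n: "nat_trans T A F G \<eta>"
  shows "is_zero_arr (funcat A T) (F, G, \<eta>) \<longleftrightarrow> (\<forall>x \<in> Obj T. is_zero_arr A (\<eta> x))"
proof -
  obtain z where z: "is_zero_obj A z" using p unfolding pointed_def by blast
  let ?Z = "Zf T A z"
  have Zz: "is_zero_obj (funcat A T) ?Z" using Zf_zero[OF A T z] .
  have FC: "category (funcat A T)" using funcat_category[OF A T] .
  have F: "is_functor T A F" and G: "is_functor T A G" using nt_functors[OF n] by auto
  have FO: "F \<in> Obj (funcat A T)" and GO: "G \<in> Obj (funcat A T)" using F G by (auto simp: funcat_Obj)
  obtain g where g: "g \<in> hom (funcat A T) F ?Z"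
    using zero_term[OF Zz FO] by blast
  obtain k where k: "k \<in> hom (funcat A T) ?Z G"
    using zero_init[OF Zz GO] by blast
  obtain g' where g': "g = (F, ?Z, g')" "nat_trans T A F ?Z g'" using funcat_homE[OF g] .
  obtain k' where k': "k = (?Z, G, k')" "nat_trans T A ?Z G k'" using funcat_homE[OF k] .
  have fZ: "\<And>x. x \<in> Obj T \<Longrightarrow> fst ?Z x = z" by (simp add: Zf_def)
  have kg: "Cmp (funcat A T) k g = (F, G, \<lambda>x \<in> Obj T. Cmp A (k' x) (g' x))"
    unfolding g'(1) k'(1) funcat_Cmp ..
  have kgz: "is_zero_arr (funcat A T) (Cmp (funcat A T) k g)" using through_zero[OF FC Zz g k] .
  have kgh: "Cmp (funcat A T) k g \<in> hom (funcat A T) F G" using cat_comp[OF FC g k] .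
  have cz: "is_zero_arr A (Cmp A (k' x) (g' x))" if x: "x \<in> Obj T" for x
    using through_zero[OF A z] nt_comp[OF g'(2) x] nt_comp[OF k'(2) x] fZ[OF x] by simp
  have ch: "Cmp A (k' x) (g' x) \<in> hom A (fst F x) (fst G x)" if x: "x \<in> Obj T" for x
    using cat_comp[OF A nt_comp[OF g'(2) x] nt_comp[OF k'(2) x]] fZ[OF x] by simp
  show ?thesis
  proof
    assume zz: "is_zero_arr (funcat A T) (F, G, \<eta>)"
    have "(F, G, \<eta>) = Cmp (funcat A T) k g"
      using zero_arr_unique[OF FC zz funcat_homI[OF n] kgz kgh] .
    then have e: "\<eta> = (\<lambda>x \<in> Obj T. Cmp A (k' x) (g' x))" using kg by simp
    show "\<forall>x \<in> Obj T. is_zero_arr A (\<eta> x)" using e cz by simp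
  next
    assume pz: "\<forall>x \<in> Obj T. is_zero_arr A (\<eta> x)"
    have "\<eta> = (\<lambda>x \<in> Obj T. Cmp A (k' x) (g' x))"
    proof
      fix x show "\<eta> x = (\<lambda>x \<in> Obj T. Cmp A (k' x) (g' x)) x"
      proof (cases "x \<in> Obj T")
        case True
        then show ?thesis using zero_arr_unique[OF A bspec[OF pz True] nt_comp[OF n True] cz[OF True] ch[OF True]] by simp
      next
        case False then show ?thesis using nt_undef[OF n False] by simp
      qed
    qed
    then show "is_zero_arr (funcat A T) (F, G, \<eta>)" using kgz kg by simp
  qed
qed


lemma bracketD: "t \<in> bracket T S x \<Longrightarrow> t \<in> Arr T \<and> Cod T t = x \<and> Dom T t \<notin> S"
  unfolding bracket_def by blast
lemma bracketI: "t \<in> Arr T \<Longrightarrow> Cod T t = x \<Longrightarrow> Dom T t \<notin> S \<Longrightarrow> t \<in> bracket T S x"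
  unfolding bracket_def by blast

locale rdata =
  fixes A :: "('ao,'am) cat" and T :: "('to,'tm) cat" and S :: "'to set"
    and F :: "('to,'tm,'ao,'am) ftor"
    and P :: "'to \<Rightarrow> 'ao" and \<iota> :: "'to \<Rightarrow> 'tm \<Rightarrow> 'am" and \<sigma> :: "'to \<Rightarrow> 'am"
    and q :: "'to \<Rightarrow> 'am" and R :: "'to \<Rightarrow> 'ao"
  assumes A: "category A" and pA: "pointed A" and T: "category T" and F: "is_functor T A F"
    and D: "\<And>x. x \<in> Obj T \<Longrightarrow>
            is_coproduct A (bracket T S x) (\<lambda>t. fst F (Dom T t)) (P x) (\<iota> x) \<and>
            \<sigma> x \<in> hom A (P x) (fst F x) \<and>
            (\<forall>t \<in> bracket T S x. Cmp A (\<sigma> x) (\<iota> x t) = snd F t) \<and>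
            is_cokernel A (\<sigma> x) (q x) \<and> R x = Cod A (q x)"
begin

lemma cp: "x \<in> Obj T \<Longrightarrow> is_coproduct A (bracket T S x) (\<lambda>t. fst F (Dom T t)) (P x) (\<iota> x)"
  using D by blast
lemma \<sigma>h: "x \<in> Obj T \<Longrightarrow> \<sigma> x \<in> hom A (P x) (fst F x)"
  using D by blast
lemma \<sigma>\<iota>: "x \<in> Obj T \<Longrightarrow> t \<in> bracket T S x \<Longrightarrow> Cmp A (\<sigma> x) (\<iota> x t) = snd F t"
  using D by blast
lemma ck: "x \<in> Obj T \<Longrightarrow> is_cokernel A (\<sigma> x) (q x)"
  using D by blast
lemma Rq: "x \<in> Obj T \<Longrightarrow> R x = Cod A (q x)"
  using D by blast
lemma cod\<sigma>: "x \<in> Obj T \<Longrightarrow> Cod A (\<sigma> x) = fst F x"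
  using homD[OF \<sigma>h] by blast
lemma qh: "x \<in> Obj T \<Longrightarrow> q x \<in> hom A (fst F x) (R x)"
  using coker_hom[OF ck] cod\<sigma> Rq by metis
lemma RO: "x \<in> Obj T \<Longrightarrow> R x \<in> Obj A"
  using cat_obj_cod[OF A qh] .
lemma PO: "x \<in> Obj T \<Longrightarrow> P x \<in> Obj A"
  using coprod_obj[OF cp] .
lemma ck': "x \<in> Obj T \<Longrightarrow> g \<in> hom A (fst F x) Y \<Longrightarrow> is_zero_arr A (Cmp A g (\<sigma> x)) \<Longrightarrow>
   \<exists>!h. h \<in> hom A (R x) Y \<and> Cmp A h (q x) = g"
  using coker_univ[OF ck, of x g Y] cod\<sigma> Rq by simp
lemma epi: "x \<in> Obj T \<Longrightarrow> h1 \<in> hom A (R x) Y \<Longrightarrow> h2 \<in> hom A (R x) Y \<Longrightarrow>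
   Cmp A h1 (q x) = Cmp A h2 (q x) \<Longrightarrow> h1 = h2"
  using coker_epi[OF A ck, of x h1 Y h2] Rq by simp
lemma q\<sigma>z: "x \<in> Obj T \<Longrightarrow> is_zero_arr A (Cmp A (q x) (\<sigma> x))"
  using coker_zero[OF ck] .

lemma brk: "t \<in> bracket T S x \<Longrightarrow> t \<in> hom T (Dom T t) x \<and> Dom T t \<in> Obj T \<and> Dom T t \<notin> S"
proof -
  assume t: "t \<in> bracket T S x"
  have "t \<in> hom T (Dom T t) x" using bracketD[OF t] homI by metis
  then show ?thesis using cat_obj_dom[OF T] bracketD[OF t] by blast
qed

lemma \<iota>h: "x \<in> Obj T \<Longrightarrow> t \<in> bracket T S x \<Longrightarrow> \<iota> x t \<in> hom A (fst F (Dom T t)) (P x)"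
  using coprod_inj[OF cp] by blast

lemma brk_comp: "f \<in> hom T x y \<Longrightarrow> t \<in> bracket T S x \<Longrightarrow> Cmp T f t \<in> bracket T S y \<and> Dom T (Cmp T f t) = Dom T t"
proof -
  assume f: "f \<in> hom T x y" and t: "t \<in> bracket T S x"
  have c: "Cmp T f t \<in> hom T (Dom T t) y" using cat_comp[OF T _ f] brk[OF t] by blast
  show ?thesis using homD[OF c] brk[OF t] bracketI by metis
qed

lemma coprod_zeroP:
  assumes x: "x \<in> Obj T" and h: "h \<in> hom A (P x) Y"
    and z: "\<And>t. t \<in> bracket T S x \<Longrightarrow> is_zero_arr A (Cmp A h (\<iota> x t))"
  shows "is_zero_arr A h"
  using coprod_zero[OF A pA cp[OF x] h z] fun_obj[OF F] brk by blast

lemma key: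
  assumes f: "f \<in> hom T x y"
  shows "is_zero_arr A (Cmp A (Cmp A (q y) (snd F f)) (\<sigma> x))"
proof -
  have x: "x \<in> Obj T" and y: "y \<in> Obj T" using cat_obj_dom[OF T f] cat_obj_cod[OF T f] by auto
  note Ff = fun_arr[OF F f]
  have g: "Cmp A (q y) (snd F f) \<in> hom A (fst F x) (R y)" using cat_comp[OF A Ff qh[OF y]] .
  show ?thesis
  proof (rule coprod_zeroP[OF x cat_comp[OF A \<sigma>h[OF x] g]])
    fix t assume t: "t \<in> bracket T S x"
    note tb = brk[OF t] and ft = brk_comp[OF f t]
    note it = \<iota>h[OF x t]
    have "Cmp A (Cmp A (Cmp A (q y) (snd F f)) (\<sigma> x)) (\<iota> x t)
        = Cmp A (Cmp A (q y) (snd F f)) (Cmp A (\<sigma> x) (\<iota> x t))"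
      using cat_assoc[OF A it \<sigma>h[OF x] g] by simp
    also have "\<dots> = Cmp A (Cmp A (q y) (snd F f)) (snd F t)" using \<sigma>\<iota>[OF x t] by simp
    also have "\<dots> = Cmp A (q y) (Cmp A (snd F f) (snd F t))"
      using cat_assoc[OF A fun_arr[OF F conjunct1[OF tb]] Ff qh[OF y]] by simp
    also have "\<dots> = Cmp A (q y) (snd F (Cmp T f t))" using fun_comp[OF F conjunct1[OF tb] f] by simp
    also have "\<dots> = Cmp A (q y) (Cmp A (\<sigma> y) (\<iota> y (Cmp T f t)))" using \<sigma>\<iota>[OF y conjunct1[OF ft]] by simp
    also have "\<dots> = Cmp A (Cmp A (q y) (\<sigma> y)) (\<iota> y (Cmp T f t))"
      using cat_assoc[OF A \<iota>h[OF y conjunct1[OF ft]] \<sigma>h[OF y] qh[OF y]] .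
    finally have e: "Cmp A (Cmp A (Cmp A (q y) (snd F f)) (\<sigma> x)) (\<iota> x t) =
        Cmp A (Cmp A (q y) (\<sigma> y)) (\<iota> y (Cmp T f t))" .
    have "Dom A (Cmp A (q y) (\<sigma> y)) = P y" using homD[OF cat_comp[OF A \<sigma>h[OF y] qh[OF y]]] by blast
    then have "is_zero_arr A (Cmp A (Cmp A (q y) (\<sigma> y)) (\<iota> y (Cmp T f t)))"
      using zero_comp_right[OF A q\<sigma>z[OF y], of "\<iota> y (Cmp T f t)"] \<iota>h[OF y conjunct1[OF ft]] by simp
    then show "is_zero_arr A (Cmp A (Cmp A (Cmp A (q y) (snd F f)) (\<sigma> x)) (\<iota> x t))" using e by simp
  qed
qed

end


context rdata
begin

definition Rm :: "'tm \<Rightarrow> 'am" where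
  "Rm f = (if f \<in> Arr T then (THE h. h \<in> hom A (R (Dom T f)) (R (Cod T f)) \<and>
              Cmp A h (q (Dom T f)) = Cmp A (q (Cod T f)) (snd F f)) else undefined)"

definition Rfun :: "('to,'tm,'ao,'am) ftor" where
  "Rfun = ((\<lambda>x \<in> Obj T. R x), Rm)"

lemma Rm_ex: "f \<in> hom T x y \<Longrightarrow>
   \<exists>!h. h \<in> hom A (R x) (R y) \<and> Cmp A h (q x) = Cmp A (q y) (snd F f)"
proof -
  assume f: "f \<in> hom T x y"
  have x: "x \<in> Obj T" and y: "y \<in> Obj T" using cat_obj_dom[OF T f] cat_obj_cod[OF T f] by auto
  have g: "Cmp A (q y) (snd F f) \<in> hom A (fst F x) (R y)" using cat_comp[OF A fun_arr[OF F f] qh[OF y]] .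
  show ?thesis using ck'[OF x g key[OF f]] .
qed

lemma Rm_prop: "f \<in> hom T x y \<Longrightarrow> Rm f \<in> hom A (R x) (R y) \<and> Cmp A (Rm f) (q x) = Cmp A (q y) (snd F f)"
proof -
  assume f: "f \<in> hom T x y"
  have "Rm f = (THE h. h \<in> hom A (R x) (R y) \<and> Cmp A h (q x) = Cmp A (q y) (snd F f))"
    using homD[OF f] by (simp add: Rm_def)
  then show ?thesis using theI'[OF Rm_ex[OF f]] by simp
qed

lemma Rm_uniq: "f \<in> hom T x y \<Longrightarrow> h \<in> hom A (R x) (R y) \<Longrightarrow> Cmp A h (q x) = Cmp A (q y) (snd F f) \<Longrightarrow> h = Rm f"
  using Rm_ex Rm_prop by blast

lemma Rfun_functor: "is_functor T A Rfun"
proof (rule functorI)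
  show "\<And>x. x \<in> Obj T \<Longrightarrow> fst Rfun x \<in> Obj A" using RO by (simp add: Rfun_def)
  show "\<And>f x y. f \<in> hom T x y \<Longrightarrow> snd Rfun f \<in> hom A (fst Rfun x) (fst Rfun y)"
    using Rm_prop cat_obj_dom[OF T] cat_obj_cod[OF T] by (simp add: Rfun_def)
  show "\<And>x. x \<in> Obj T \<Longrightarrow> snd Rfun (Idm T x) = Idm A (fst Rfun x)"
  proof -
    fix x assume x: "x \<in> Obj T"
    note i = cat_id[OF T x]
    have "Cmp A (Idm A (R x)) (q x) = Cmp A (q x) (snd F (Idm T x))"
      using cat_idl[OF A qh[OF x]] cat_idr[OF A qh[OF x]] fun_id[OF F x] by simp
    then have "Idm A (R x) = Rm (Idm T x)" using Rm_uniq[OF i cat_id[OF A RO[OF x]]] by simp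
    then show "snd Rfun (Idm T x) = Idm A (fst Rfun x)" using x by (simp add: Rfun_def)
  qed
  show "\<And>f g x y z. f \<in> hom T x y \<Longrightarrow> g \<in> hom T y z \<Longrightarrow>
            snd Rfun (Cmp T g f) = Cmp A (snd Rfun g) (snd Rfun f)"
  proof -
    fix f g x y z assume f: "f \<in> hom T x y" and g: "g \<in> hom T y z"
    have x: "x \<in> Obj T" and y: "y \<in> Obj T" and z: "z \<in> Obj T"
      using cat_obj_dom[OF T f] cat_obj_cod[OF T f] cat_obj_cod[OF T g] by auto
    note rf = Rm_prop[OF f] and rg = Rm_prop[OF g]
    have "Cmp A (Cmp A (Rm g) (Rm f)) (q x) = Cmp A (Rm g) (Cmp A (Rm f) (q x))"
      using cat_assoc[OF A qh[OF x] conjunct1[OF rf] conjunct1[OF rg]] by simp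
    also have "\<dots> = Cmp A (Rm g) (Cmp A (q y) (snd F f))" using rf by simp
    also have "\<dots> = Cmp A (Cmp A (Rm g) (q y)) (snd F f)"
      using cat_assoc[OF A fun_arr[OF F f] qh[OF y] conjunct1[OF rg]] .
    also have "\<dots> = Cmp A (Cmp A (q z) (snd F g)) (snd F f)" using rg by simp
    also have "\<dots> = Cmp A (q z) (Cmp A (snd F g) (snd F f))"
      using cat_assoc[OF A fun_arr[OF F f] fun_arr[OF F g] qh[OF z]] by simp
    also have "\<dots> = Cmp A (q z) (snd F (Cmp T g f))" using fun_comp[OF F f g] by simp
    finally have "Cmp A (Rm g) (Rm f) = Rm (Cmp T g f)"
      using Rm_uniq[OF cat_comp[OF T f g] cat_comp[OF A conjunct1[OF rf] conjunct1[OF rg]]] by simp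
    then show "snd Rfun (Cmp T g f) = Cmp A (snd Rfun g) (snd Rfun f)" by (simp add: Rfun_def)
  qed
qed (auto simp: Rfun_def Rm_def)

lemma fst_Rfun: "x \<in> Obj T \<Longrightarrow> fst Rfun x = R x" by (simp add: Rfun_def)
lemma snd_Rfun: "snd Rfun f = Rm f" by (simp add: Rfun_def)

lemma unit_nt: "nat_trans T A F Rfun (\<lambda>x \<in> Obj T. q x)"
proof (rule nat_transI[OF F Rfun_functor])
  show "\<And>x. x \<in> Obj T \<Longrightarrow> (\<lambda>x \<in> Obj T. q x) x \<in> hom A (fst F x) (fst Rfun x)"
    using qh fst_Rfun by simp
  fix f x y assume f: "f \<in> hom T x y"
  have x: "x \<in> Obj T" and y: "y \<in> Obj T" using cat_obj_dom[OF T f] cat_obj_cod[OF T f] by auto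
  show "Cmp A ((\<lambda>x \<in> Obj T. q x) y) (snd F f) = Cmp A (snd Rfun f) ((\<lambda>x \<in> Obj T. q x) x)"
    using x y Rm_prop[OF f] snd_Rfun by simp
qed simp

lemma R_zero:
  assumes x: "x \<in> Obj T" and xS: "x \<notin> S"
  shows "is_zero_obj A (R x)"
proof -
  have ib: "Idm T x \<in> bracket T S x"
    using homD[OF cat_id[OF T x]] xS bracketI by metis
  have dI: "Dom T (Idm T x) = x" using homD[OF cat_id[OF T x]] by blast
  have "Cmp A (\<sigma> x) (\<iota> x (Idm T x)) = Idm A (fst F x)" using \<sigma>\<iota>[OF x ib] fun_id[OF F x] by simp
  then have "q x = Cmp A (Cmp A (q x) (\<sigma> x)) (\<iota> x (Idm T x))"
    using cat_assoc[OF A \<iota>h[OF x ib] \<sigma>h[OF x] qh[OF x]] cat_idr[OF A qh[OF x]] by simp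
  moreover have "is_zero_arr A (Cmp A (Cmp A (q x) (\<sigma> x)) (\<iota> x (Idm T x)))"
  proof -
    have "Dom A (Cmp A (q x) (\<sigma> x)) = P x" using homD[OF cat_comp[OF A \<sigma>h[OF x] qh[OF x]]] by blast
    then show ?thesis using zero_comp_right[OF A q\<sigma>z[OF x], of "\<iota> x (Idm T x)"] \<iota>h[OF x ib] by simp
  qed
  ultimately have qz: "is_zero_arr A (q x)" by simp
  have qd: "Dom A (q x) = fst F x" "Cod A (q x) = R x" using homD[OF qh[OF x]] by auto
  have FxO: "fst F x \<in> Obj A" using fun_obj[OF F x] .
  have init: "\<exists>!f. f \<in> hom A (R x) a" if a: "a \<in> Obj A" for a
  proof -
    obtain g0 where g0: "g0 \<in> hom A (fst F x) a" "is_zero_arr A g0"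
      using zero_arr_exists[OF A pA FxO a] by blast
    have "Dom A g0 = fst F x" using homD[OF g0(1)] by blast
    then have "is_zero_arr A (Cmp A g0 (\<sigma> x))"
      using zero_comp_right[OF A g0(2), of "\<sigma> x" "P x"] \<sigma>h[OF x] by simp
    then obtain h where h: "h \<in> hom A (R x) a" using ck'[OF x g0(1)] by blast
    show ?thesis
    proof (rule ex1I[of _ h])
      show "h \<in> hom A (R x) a" using h .
    next
      fix h' assume h': "h' \<in> hom A (R x) a"
      have z1: "is_zero_arr A (Cmp A h' (q x))" using zero_comp_left[OF A qz] h' qd by simp
      have z2: "is_zero_arr A (Cmp A h (q x))" using zero_comp_left[OF A qz] h qd by simp
      have "Cmp A h' (q x) = Cmp A h (q x)"
        using zero_arr_unique[OF A z1 cat_comp[OF A qh[OF x] h'] z2 cat_comp[OF A qh[OF x] h]] .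
      then show "h' = h" using epi[OF x h' h] by simp
    qed
  qed
  have trm: "\<exists>!f. f \<in> hom A a (R x)" if a: "a \<in> Obj A" for a
  proof -
    obtain z' g0 k where zz: "is_zero_obj A z'" "g0 \<in> hom A (fst F x) z'" "k \<in> hom A z' (R x)" "q x = Cmp A k g0"
      using zero_arrD[OF qz] qd by metis
    obtain m where m: "m \<in> hom A a z'" using zero_term[OF zz(1) a] by blast
    obtain g1 where g1: "g1 \<in> hom A (R x) z'" using zero_term[OF zz(1) RO[OF x]] by blast
    have idk: "Idm A (R x) = Cmp A k g1"
      using init[OF RO[OF x]] cat_id[OF A RO[OF x]] cat_comp[OF A g1 zz(3)] by blast
    show ?thesis
    proof (rule ex1I[of _ "Cmp A k m"])
      show "Cmp A k m \<in> hom A a (R x)" using cat_comp[OF A m zz(3)] .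
    next
      fix f assume f: "f \<in> hom A a (R x)"
      have "f = Cmp A (Idm A (R x)) f" using cat_idl[OF A f] by simp
      also have "\<dots> = Cmp A k (Cmp A g1 f)" using idk cat_assoc[OF A f g1 zz(3)] by simp
      also have "Cmp A g1 f = m" using zero_term_uniq[OF A zz(1) cat_comp[OF A f g1] m] .
      finally show "f = Cmp A k m" .
    qed
  qed
  show ?thesis unfolding is_zero_obj_def is_initial_def is_terminal_def
    using init trm RO[OF x] by blast
qed

lemma Rfun_van: "Rfun \<in> vanishing_outside A T S"
  unfolding vanishing_outside_def using Rfun_functor R_zero fst_Rfun by auto

end


context rdata
begin

abbreviation unit :: "('to,'tm,'ao,'am) ftor \<times> ('to,'tm,'ao,'am) ftor \<times> ('to \<Rightarrow> 'am)" where
  "unit \<equiv> (F, Rfun, (\<lambda>x \<in> Obj T. q x))"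

lemma factor:
  assumes n: "nat_trans T A F G \<theta>" and z: "\<And>x. x \<in> Obj T \<Longrightarrow> is_zero_arr A (Cmp A (\<theta> x) (\<sigma> x))"
  shows "\<exists>!g. g \<in> hom (funcat A T) Rfun G \<and> Cmp (funcat A T) g unit = (F, G, \<theta>)"
proof -
  have G: "is_functor T A G" using nt_functors[OF n] by blast
  have ex: "\<exists>!h. h \<in> hom A (R x) (fst G x) \<and> Cmp A h (q x) = \<theta> x" if x: "x \<in> Obj T" for x
    using ck'[OF x nt_comp[OF n x] z[OF x]] .
  define \<psi> where "\<psi> = (\<lambda>x \<in> Obj T. THE h. h \<in> hom A (R x) (fst G x) \<and> Cmp A h (q x) = \<theta> x)"
  have \<psi>p: "\<psi> x \<in> hom A (R x) (fst G x) \<and> Cmp A (\<psi> x) (q x) = \<theta> x" if x: "x \<in> Obj T" for x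
    using theI'[OF ex[OF x]] x by (simp add: \<psi>_def)
  have nt: "nat_trans T A Rfun G \<psi>"
  proof (rule nat_transI[OF Rfun_functor G])
    show "\<And>x. x \<in> Obj T \<Longrightarrow> \<psi> x \<in> hom A (fst Rfun x) (fst G x)" using \<psi>p fst_Rfun by simp
    fix f x y assume f: "f \<in> hom T x y"
    have x: "x \<in> Obj T" and y: "y \<in> Obj T" using cat_obj_dom[OF T f] cat_obj_cod[OF T f] by auto
    note rf = Rm_prop[OF f] and px = \<psi>p[OF x] and py = \<psi>p[OF y]
    have l: "Cmp A (\<psi> y) (Rm f) \<in> hom A (R x) (fst G y)" using cat_comp[OF A conjunct1[OF rf] conjunct1[OF py]] .
    have r: "Cmp A (snd G f) (\<psi> x) \<in> hom A (R x) (fst G y)" using cat_comp[OF A conjunct1[OF px] fun_arr[OF G f]] .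
    have "Cmp A (Cmp A (\<psi> y) (Rm f)) (q x) = Cmp A (\<psi> y) (Cmp A (Rm f) (q x))"
      using cat_assoc[OF A qh[OF x] conjunct1[OF rf] conjunct1[OF py]] by simp
    also have "\<dots> = Cmp A (\<psi> y) (Cmp A (q y) (snd F f))" using rf by simp
    also have "\<dots> = Cmp A (Cmp A (\<psi> y) (q y)) (snd F f)"
      using cat_assoc[OF A fun_arr[OF F f] qh[OF y] conjunct1[OF py]] .
    also have "\<dots> = Cmp A (\<theta> y) (snd F f)" using py by simp
    also have "\<dots> = Cmp A (snd G f) (\<theta> x)" using nt_nat[OF n f] .
    also have "\<dots> = Cmp A (snd G f) (Cmp A (\<psi> x) (q x))" using px by simp
    also have "\<dots> = Cmp A (Cmp A (snd G f) (\<psi> x)) (q x)"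
      using cat_assoc[OF A qh[OF x] conjunct1[OF px] fun_arr[OF G f]] .
    finally have "Cmp A (\<psi> y) (Rm f) = Cmp A (snd G f) (\<psi> x)" using epi[OF x l r] by simp
    then show "Cmp A (\<psi> y) (snd Rfun f) = Cmp A (snd G f) (\<psi> x)" using snd_Rfun by simp
  qed (simp add: \<psi>_def)
  have cmp: "Cmp (funcat A T) (Rfun, G, \<psi>') unit = (F, G, \<lambda>x \<in> Obj T. Cmp A (\<psi>' x) (q x))" for \<psi>'
    unfolding funcat_Cmp by (intro arg_cong[where f="\<lambda>z. (F, G, z)"] ext) simp
  show ?thesis
  proof (rule ex1I[of _ "(Rfun, G, \<psi>)"])
    have "(\<lambda>x \<in> Obj T. Cmp A (\<psi> x) (q x)) = \<theta>"
    proof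
      fix x show "(\<lambda>x \<in> Obj T. Cmp A (\<psi> x) (q x)) x = \<theta> x"
        using \<psi>p nt_undef[OF n] by (cases "x \<in> Obj T") auto
    qed
    then show "(Rfun, G, \<psi>) \<in> hom (funcat A T) Rfun G \<and> Cmp (funcat A T) (Rfun, G, \<psi>) unit = (F, G, \<theta>)"
      using funcat_homI[OF nt] cmp by simp
  next
    fix g assume g: "g \<in> hom (funcat A T) Rfun G \<and> Cmp (funcat A T) g unit = (F, G, \<theta>)"
    obtain \<psi>' where g': "g = (Rfun, G, \<psi>')" "nat_trans T A Rfun G \<psi>'" using funcat_homE g by blast
    have e: "(\<lambda>x \<in> Obj T. Cmp A (\<psi>' x) (q x)) = \<theta>" using g g'(1) cmp by simp
    have "\<psi>' = \<psi>"
    proof (rule nt_eqI[OF g'(2) nt])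
      fix x assume x: "x \<in> Obj T"
      have h': "\<psi>' x \<in> hom A (R x) (fst G x)" using nt_comp[OF g'(2) x] fst_Rfun[OF x] by simp
      have "Cmp A (\<psi>' x) (q x) = \<theta> x" using fun_cong[OF e, of x] x by simp
      then show "\<psi>' x = \<psi> x" using epi[OF x h' conjunct1[OF \<psi>p[OF x]]] \<psi>p[OF x] by simp
    qed
    then show "g = (Rfun, G, \<psi>)" using g' by simp
  qed
qed

lemma reflection: "is_reflection (funcat A T) (vanishing_outside A T S) F Rfun unit"
  unfolding is_reflection_def
proof (intro conjI ballI)
  show "Rfun \<in> vanishing_outside A T S" using Rfun_van .
  show "unit \<in> hom (funcat A T) F Rfun" using funcat_homI[OF unit_nt] .
next
  fix d f assume d: "d \<in> vanishing_outside A T S" and f: "f \<in> hom (funcat A T) F d"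
  obtain \<theta> where t: "f = (F, d, \<theta>)" "nat_trans T A F d \<theta>" using funcat_homE[OF f] .
  have dF: "is_functor T A d" and dz: "\<And>x. x \<in> Obj T - S \<Longrightarrow> is_zero_obj A (fst d x)"
    using d unfolding vanishing_outside_def by auto
  have z: "is_zero_arr A (Cmp A (\<theta> x) (\<sigma> x))" if x: "x \<in> Obj T" for x
  proof (rule coprod_zeroP[OF x cat_comp[OF A \<sigma>h[OF x] nt_comp[OF t(2) x]]])
    fix s assume s: "s \<in> bracket T S x"
    note sb = brk[OF s]
    have "Cmp A (Cmp A (\<theta> x) (\<sigma> x)) (\<iota> x s) = Cmp A (\<theta> x) (Cmp A (\<sigma> x) (\<iota> x s))"
      using cat_assoc[OF A \<iota>h[OF x s] \<sigma>h[OF x] nt_comp[OF t(2) x]] by simp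
    also have "\<dots> = Cmp A (\<theta> x) (snd F s)" using \<sigma>\<iota>[OF x s] by simp
    also have "\<dots> = Cmp A (snd d s) (\<theta> (Dom T s))" using nt_nat[OF t(2) conjunct1[OF sb]] .
    finally show "is_zero_arr A (Cmp A (Cmp A (\<theta> x) (\<sigma> x)) (\<iota> x s))"
      using through_zero[OF A dz[of "Dom T s"] nt_comp[OF t(2)] fun_arr[OF dF conjunct1[OF sb]]] sb by simp
  qed
  show "\<exists>!g. g \<in> hom (funcat A T) Rfun d \<and> Cmp (funcat A T) g unit = f"
    using factor[OF t(2) z] t(1) by simp
qed

end


context rdata
begin

definition Pm :: "'tm \<Rightarrow> 'am" where
  "Pm f = (if f \<in> Arr T then (THE h. h \<in> hom A (P (Dom T f)) (P (Cod T f)) \<and>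
     (\<forall>t \<in> bracket T S (Dom T f). Cmp A h (\<iota> (Dom T f) t) = \<iota> (Cod T f) (Cmp T f t))) else undefined)"

definition Pfun :: "('to,'tm,'ao,'am) ftor" where
  "Pfun = ((\<lambda>x \<in> Obj T. P x), Pm)"

lemma Pm_ex: "f \<in> hom T x y \<Longrightarrow>
   \<exists>!h. h \<in> hom A (P x) (P y) \<and> (\<forall>t \<in> bracket T S x. Cmp A h (\<iota> x t) = \<iota> y (Cmp T f t))"
proof -
  assume f: "f \<in> hom T x y"
  have x: "x \<in> Obj T" and y: "y \<in> Obj T" using cat_obj_dom[OF T f] cat_obj_cod[OF T f] by auto
  show ?thesis
  proof (rule coprod_map[OF cp[OF x] PO[OF y]])
    fix t assume t: "t \<in> bracket T S x"
    show "\<iota> y (Cmp T f t) \<in> hom A (fst F (Dom T t)) (P y)"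
      using \<iota>h[OF y conjunct1[OF brk_comp[OF f t]]] brk_comp[OF f t] by simp
  qed
qed

lemma Pm_prop: "f \<in> hom T x y \<Longrightarrow> Pm f \<in> hom A (P x) (P y) \<and> (\<forall>t \<in> bracket T S x. Cmp A (Pm f) (\<iota> x t) = \<iota> y (Cmp T f t))"
proof -
  assume f: "f \<in> hom T x y"
  have "Pm f = (THE h. h \<in> hom A (P x) (P y) \<and> (\<forall>t \<in> bracket T S x. Cmp A h (\<iota> x t) = \<iota> y (Cmp T f t)))"
    using homD[OF f] by (simp add: Pm_def)
  then show ?thesis using theI'[OF Pm_ex[OF f]] by simp
qed

lemma Pfun_functor: "is_functor T A Pfun"
proof (rule functorI)
  show "\<And>x. x \<in> Obj T \<Longrightarrow> fst Pfun x \<in> Obj A" using PO by (simp add: Pfun_def)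
  show "\<And>f x y. f \<in> hom T x y \<Longrightarrow> snd Pfun f \<in> hom A (fst Pfun x) (fst Pfun y)"
    using Pm_prop cat_obj_dom[OF T] cat_obj_cod[OF T] by (simp add: Pfun_def)
  show "\<And>x. x \<in> Obj T \<Longrightarrow> snd Pfun (Idm T x) = Idm A (fst Pfun x)"
  proof -
    fix x assume x: "x \<in> Obj T"
    note i = cat_id[OF T x]
    have "Pm (Idm T x) = Idm A (P x)"
    proof (rule coprod_ext[OF A cp[OF x] conjunct1[OF Pm_prop[OF i]] cat_id[OF A PO[OF x]]])
      fix t assume t: "t \<in> bracket T S x"
      have "Cmp T (Idm T x) t = t" using cat_idl[OF T conjunct1[OF brk[OF t]]] .
      then show "Cmp A (Pm (Idm T x)) (\<iota> x t) = Cmp A (Idm A (P x)) (\<iota> x t)"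
        using Pm_prop[OF i] t cat_idl[OF A \<iota>h[OF x t]] by simp
    qed
    then show "snd Pfun (Idm T x) = Idm A (fst Pfun x)" using x by (simp add: Pfun_def)
  qed
  show "\<And>f g x y z. f \<in> hom T x y \<Longrightarrow> g \<in> hom T y z \<Longrightarrow>
            snd Pfun (Cmp T g f) = Cmp A (snd Pfun g) (snd Pfun f)"
  proof -
    fix f g x y z assume f: "f \<in> hom T x y" and g: "g \<in> hom T y z"
    have x: "x \<in> Obj T" and y: "y \<in> Obj T" and z: "z \<in> Obj T"
      using cat_obj_dom[OF T f] cat_obj_cod[OF T f] cat_obj_cod[OF T g] by auto
    note pf = Pm_prop[OF f] and pg = Pm_prop[OF g] and pgf = Pm_prop[OF cat_comp[OF T f g]]
    have "Pm (Cmp T g f) = Cmp A (Pm g) (Pm f)"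
    proof (rule coprod_ext[OF A cp[OF x] conjunct1[OF pgf] cat_comp[OF A conjunct1[OF pf] conjunct1[OF pg]]])
      fix t assume t: "t \<in> bracket T S x"
      have "Cmp A (Cmp A (Pm g) (Pm f)) (\<iota> x t) = Cmp A (Pm g) (Cmp A (Pm f) (\<iota> x t))"
        using cat_assoc[OF A \<iota>h[OF x t] conjunct1[OF pf] conjunct1[OF pg]] by simp
      also have "\<dots> = Cmp A (Pm g) (\<iota> y (Cmp T f t))" using pf t by simp
      also have "\<dots> = \<iota> z (Cmp T g (Cmp T f t))" using pg conjunct1[OF brk_comp[OF f t]] by simp
      also have "\<dots> = \<iota> z (Cmp T (Cmp T g f) t)" using cat_assoc[OF T conjunct1[OF brk[OF t]] f g] by simp
      finally show "Cmp A (Pm (Cmp T g f)) (\<iota> x t) = Cmp A (Cmp A (Pm g) (Pm f)) (\<iota> x t)"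
        using pgf t by simp
    qed
    then show "snd Pfun (Cmp T g f) = Cmp A (snd Pfun g) (snd Pfun f)" by (simp add: Pfun_def)
  qed
qed (auto simp: Pfun_def Pm_def)

lemma Sig_nt: "nat_trans T A Pfun F (\<lambda>x \<in> Obj T. \<sigma> x)"
proof (rule nat_transI[OF Pfun_functor F])
  show "\<And>x. x \<in> Obj T \<Longrightarrow> (\<lambda>x \<in> Obj T. \<sigma> x) x \<in> hom A (fst Pfun x) (fst F x)"
    using \<sigma>h by (simp add: Pfun_def)
  fix f x y assume f: "f \<in> hom T x y"
  have x: "x \<in> Obj T" and y: "y \<in> Obj T" using cat_obj_dom[OF T f] cat_obj_cod[OF T f] by auto
  note pf = Pm_prop[OF f]
  have "Cmp A (\<sigma> y) (Pm f) = Cmp A (snd F f) (\<sigma> x)"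
  proof (rule coprod_ext[OF A cp[OF x] cat_comp[OF A conjunct1[OF pf] \<sigma>h[OF y]] cat_comp[OF A \<sigma>h[OF x] fun_arr[OF F f]]])
    fix t assume t: "t \<in> bracket T S x"
    note tb = brk[OF t] and ft = brk_comp[OF f t]
    have "Cmp A (Cmp A (\<sigma> y) (Pm f)) (\<iota> x t) = Cmp A (\<sigma> y) (Cmp A (Pm f) (\<iota> x t))"
      using cat_assoc[OF A \<iota>h[OF x t] conjunct1[OF pf] \<sigma>h[OF y]] by simp
    also have "\<dots> = Cmp A (\<sigma> y) (\<iota> y (Cmp T f t))" using pf t by simp
    also have "\<dots> = snd F (Cmp T f t)" using \<sigma>\<iota>[OF y conjunct1[OF ft]] .
    also have "\<dots> = Cmp A (snd F f) (snd F t)" using fun_comp[OF F conjunct1[OF tb] f] .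
    also have "\<dots> = Cmp A (snd F f) (Cmp A (\<sigma> x) (\<iota> x t))" using \<sigma>\<iota>[OF x t] by simp
    also have "\<dots> = Cmp A (Cmp A (snd F f) (\<sigma> x)) (\<iota> x t)"
      using cat_assoc[OF A \<iota>h[OF x t] \<sigma>h[OF x] fun_arr[OF F f]] .
    finally show "Cmp A (Cmp A (\<sigma> y) (Pm f)) (\<iota> x t) = Cmp A (Cmp A (snd F f) (\<sigma> x)) (\<iota> x t)" .
  qed
  then show "Cmp A ((\<lambda>x \<in> Obj T. \<sigma> x) y) (snd Pfun f) = Cmp A (snd F f) ((\<lambda>x \<in> Obj T. \<sigma> x) x)"
    using x y by (simp add: Pfun_def)
qed simp

lemma unit_cokernel: "is_cokernel (funcat A T) (Pfun, F, \<lambda>x \<in> Obj T. \<sigma> x) unit"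
proof -
  let ?S = "(Pfun, F, \<lambda>x \<in> Obj T. \<sigma> x)"
  have SA: "?S \<in> Arr (funcat A T)" using Sig_nt by (simp add: funcat_Arr)
  have uA: "unit \<in> Arr (funcat A T)" using unit_nt by (simp add: funcat_Arr)
  have cmpS: "Cmp (funcat A T) (G', G, \<theta>) ?S = (Pfun, G, \<lambda>x \<in> Obj T. Cmp A (\<theta> x) (\<sigma> x))" for G' G \<theta>
    unfolding funcat_Cmp by (intro arg_cong[where f="\<lambda>z. (Pfun, G, z)"] ext) simp
  have z1: "is_zero_arr (funcat A T) (Cmp (funcat A T) unit ?S)"
  proof -
    have n: "nat_trans T A Pfun Rfun (\<lambda>x \<in> Obj T. Cmp A ((\<lambda>x \<in> Obj T. q x) x) ((\<lambda>x \<in> Obj T. \<sigma> x) x))"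
      using nt_vcomp[OF A T Sig_nt unit_nt] .
    have "nat_trans T A Pfun Rfun (\<lambda>x \<in> Obj T. Cmp A (q x) (\<sigma> x))"
    proof -
      have "(\<lambda>x \<in> Obj T. Cmp A ((\<lambda>x \<in> Obj T. q x) x) ((\<lambda>x \<in> Obj T. \<sigma> x) x)) = (\<lambda>x \<in> Obj T. Cmp A (q x) (\<sigma> x))"
        by (intro ext) simp
      then show ?thesis using n by simp
    qed
    moreover have "\<forall>x \<in> Obj T. is_zero_arr A ((\<lambda>x \<in> Obj T. Cmp A (q x) (\<sigma> x)) x)" using q\<sigma>z by simp
    moreover have "Cmp (funcat A T) unit ?S = (Pfun, Rfun, \<lambda>x \<in> Obj T. Cmp A (q x) (\<sigma> x))"
      unfolding funcat_Cmp by (intro arg_cong[where f="\<lambda>z. (Pfun, Rfun, z)"] ext) simp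
    ultimately show ?thesis using funcat_zero_pointwise[OF A T pA] by simp
  qed
  show ?thesis unfolding is_cokernel_def
  proof (intro conjI ballI impI)
    show "?S \<in> Arr (funcat A T)" using SA .
    show "unit \<in> Arr (funcat A T)" using uA .
    show "Dom (funcat A T) unit = Cod (funcat A T) ?S" by (simp add: funcat_Dom funcat_Cod)
    show "is_zero_arr (funcat A T) (Cmp (funcat A T) unit ?S)" using z1 .
  next
    fix g assume gA: "g \<in> Arr (funcat A T)" and gz: "Dom (funcat A T) g = Cod (funcat A T) ?S \<and>
        is_zero_arr (funcat A T) (Cmp (funcat A T) g ?S)"
    obtain F' G \<theta> where g: "g = (F', G, \<theta>)" "nat_trans T A F' G \<theta>" using gA by (auto simp: funcat_Arr)
    have F': "F' = F" using gz g(1) by (simp add: funcat_Dom funcat_Cod)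
    have n: "nat_trans T A F G \<theta>" using g(2) F' by simp
    have nS: "nat_trans T A Pfun G (\<lambda>x \<in> Obj T. Cmp A (\<theta> x) (\<sigma> x))"
    proof -
      have "(\<lambda>x \<in> Obj T. Cmp A (\<theta> x) ((\<lambda>x \<in> Obj T. \<sigma> x) x)) = (\<lambda>x \<in> Obj T. Cmp A (\<theta> x) (\<sigma> x))"
        by (intro ext) simp
      then show ?thesis using nt_vcomp[OF A T Sig_nt n] by simp
    qed
    have "is_zero_arr (funcat A T) (Pfun, G, \<lambda>x \<in> Obj T. Cmp A (\<theta> x) (\<sigma> x))"
      using gz g(1) cmpS by simp
    then have pz: "\<And>x. x \<in> Obj T \<Longrightarrow> is_zero_arr A (Cmp A (\<theta> x) (\<sigma> x))"
      using funcat_zero_pointwise[OF A T pA nS] by simp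
    have cg: "Cod (funcat A T) g = G" "Cod (funcat A T) unit = Rfun" using g(1) by (simp_all add: funcat_Cod)
    show "\<exists>!h. h \<in> hom (funcat A T) (Cod (funcat A T) unit) (Cod (funcat A T) g) \<and> Cmp (funcat A T) h unit = g"
      using factor[OF n pz] cg g(1) F' by simp
  qed
qed

end


lemma data_exists:
  fixes A :: "('ao,'am) cat" and T :: "('to,'tm) cat" and F :: "('to,'tm,'ao,'am) ftor"
  assumes A: "category A" and pA: "pointed A" and fc: "has_finite_coproducts A" and hc: "has_cokernels A"
    and T: "category T" and fT: "finite (Arr T)" and F: "is_functor T A F"
  shows "\<exists>P \<iota> \<sigma> q R. rdata A T S F P \<iota> \<sigma> q R"
proof -
  define Q where "Q = (\<lambda>x (d :: 'ao \<times> ('tm \<Rightarrow> 'am) \<times> 'am \<times> 'am).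
     is_coproduct A (bracket T S x) (\<lambda>t. fst F (Dom T t)) (fst d) (fst (snd d)) \<and>
     fst (snd (snd d)) \<in> hom A (fst d) (fst F x) \<and>
     (\<forall>t \<in> bracket T S x. Cmp A (fst (snd (snd d))) (fst (snd d) t) = snd F t) \<and>
     is_cokernel A (fst (snd (snd d))) (snd (snd (snd d))))"
  have ex: "\<exists>d. Q x d" if x: "x \<in> Obj T" for x
  proof -
    have fin: "finite (bracket T S x)" using fT finite_subset[of "bracket T S x" "Arr T"]
      unfolding bracket_def by blast
    have th: "t \<in> hom T (Dom T t) x" if t: "t \<in> bracket T S x" for t
      using bracketD[OF t] homI by metis
    have obj: "\<And>t. t \<in> bracket T S x \<Longrightarrow> fst F (Dom T t) \<in> Obj A"
      using fun_obj[OF F] cat_obj_dom[OF T] th by metis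
    obtain P0 \<iota>0 where cp: "is_coproduct A (bracket T S x) (\<lambda>t. fst F (Dom T t)) P0 \<iota>0"
      using coprod_reindex[OF A fc fin, of "\<lambda>t. fst F (Dom T t)"] obj by blast
    have sa: "\<And>t. t \<in> bracket T S x \<Longrightarrow> snd F t \<in> hom A (fst F (Dom T t)) (fst F x)"
      using fun_arr[OF F th] .
    have "\<exists>!h. h \<in> hom A P0 (fst F x) \<and> (\<forall>t \<in> bracket T S x. Cmp A h (\<iota>0 t) = snd F t)"
      using coprod_map[OF cp fun_obj[OF F x] sa] .
    then obtain \<sigma>0 where s: "\<sigma>0 \<in> hom A P0 (fst F x)" "\<forall>t \<in> bracket T S x. Cmp A \<sigma>0 (\<iota>0 t) = snd F t"
      by blast
    have "\<sigma>0 \<in> Arr A" using homD[OF s(1)] by blast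
    then obtain q0 where q0: "is_cokernel A \<sigma>0 q0" using hc unfolding has_cokernels_def by blast
    have "Q x (P0, \<iota>0, \<sigma>0, q0)" unfolding Q_def using cp s q0 by simp
    then show ?thesis by blast
  qed
  obtain dd where dd: "\<forall>x \<in> Obj T. Q x (dd x)" using bchoice[of "Obj T" Q] ex by blast
  have "rdata A T S F (\<lambda>x. fst (dd x)) (\<lambda>x. fst (snd (dd x))) (\<lambda>x. fst (snd (snd (dd x))))
          (\<lambda>x. snd (snd (snd (dd x)))) (\<lambda>x. Cod A (snd (snd (snd (dd x)))))"
  proof (rule rdata.intro[OF A pA T F])
    fix x assume x: "x \<in> Obj T"
    have "Q x (dd x)" using dd x by blast
    then show "is_coproduct A (bracket T S x) (\<lambda>t. fst F (Dom T t)) (fst (dd x)) (fst (snd (dd x))) \<and>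
         fst (snd (snd (dd x))) \<in> hom A (fst (dd x)) (fst F x) \<and>
         (\<forall>t\<in>bracket T S x. Cmp A (fst (snd (snd (dd x)))) (fst (snd (dd x)) t) = snd F t) \<and>
         is_cokernel A (fst (snd (snd (dd x)))) (snd (snd (snd (dd x)))) \<and>
         Cod A (snd (snd (snd (dd x)))) = Cod A (snd (snd (snd (dd x))))"
      unfolding Q_def by simp
  qed
  then show ?thesis by blast
qed

theorem mainTheorem2:
  fixes A :: "('ao,'am) cat" and T :: "('to,'tm) cat" and S :: "'to set"
  assumes "category A" and "pointed A" and "has_finite_coproducts A" and "has_cokernels A"
    and "finite_category T" and "replete_full_subcat T S"
  shows "normal_epi_reflective (funcat A T) (vanishing_outside A T S)
    \<and> (\<forall>F P \<iota> \<sigma> q R.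
         is_functor T A F \<and>
         (\<forall>x \<in> Obj T.
            is_coproduct A (bracket T S x) (\<lambda>t. fst F (Dom T t)) (P x) (\<iota> x) \<and>
            \<sigma> x \<in> hom A (P x) (fst F x) \<and>
            (\<forall>t \<in> bracket T S x. Cmp A (\<sigma> x) (\<iota> x t) = snd F t) \<and>
            is_cokernel A (\<sigma> x) (q x) \<and> R x = Cod A (q x))
         \<longrightarrow> (\<exists>Rm. is_functor T A (\<lambda>x \<in> Obj T. R x, Rm) \<and>
               is_reflection (funcat A T) (vanishing_outside A T S) F
                 (\<lambda>x \<in> Obj T. R x, Rm) (F, (\<lambda>x \<in> Obj T. R x, Rm), (\<lambda>x \<in> Obj T. q x))))"
proof -
  note A = assms(1) and pA = assms(2) and fc = assms(3) and hc = assms(4)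
  have T: "category T" and fT: "finite (Arr T)" using assms(5) unfolding finite_category_def by auto
  have FC: "category (funcat A T)" using funcat_category[OF A T] .
  have refl: "reflective (funcat A T) (vanishing_outside A T S)"
    unfolding reflective_def
  proof (intro conjI ballI)
    show "vanishing_outside A T S \<subseteq> Obj (funcat A T)"
      unfolding vanishing_outside_def funcat_Obj by blast
  next
    fix c assume "c \<in> Obj (funcat A T)"
    then have F: "is_functor T A c" by (simp add: funcat_Obj)
    obtain P \<iota> \<sigma> q R where rd: "rdata A T S c P \<iota> \<sigma> q R" using data_exists[OF A pA fc hc T fT F] by blast
    interpret rdata A T S c P \<iota> \<sigma> q R using rd .
    show "\<exists>r u. is_reflection (funcat A T) (vanishing_outside A T S) c r u" using reflection by blast
  qed
  have ne: "normal_epi (funcat A T) u"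
    if c: "c \<in> Obj (funcat A T)" and ru: "is_reflection (funcat A T) (vanishing_outside A T S) c r u" for c r u
  proof -
    have F: "is_functor T A c" using c by (simp add: funcat_Obj)
    obtain P \<iota> \<sigma> q R where rd: "rdata A T S c P \<iota> \<sigma> q R" using data_exists[OF A pA fc hc T fT F] by blast
    interpret rdata A T S c P \<iota> \<sigma> q R using rd .
    obtain \<phi> \<psi> where i: "\<phi> \<in> hom (funcat A T) Rfun r" "\<psi> \<in> hom (funcat A T) r Rfun"
      "Cmp (funcat A T) \<psi> \<phi> = Idm (funcat A T) Rfun" "Cmp (funcat A T) \<phi> \<psi> = Idm (funcat A T) r"
      "Cmp (funcat A T) \<phi> unit = u"
      using reflection_iso[OF FC reflection ru] by blast
    have cu: "Cod (funcat A T) unit = Rfun" by (simp add: funcat_Cod)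
    have "is_cokernel (funcat A T) (Pfun, c, \<lambda>x \<in> Obj T. \<sigma> x) (Cmp (funcat A T) \<phi> unit)"
      using coker_iso[OF FC unit_cokernel, of \<phi> r \<psi>] i cu by simp
    then show ?thesis unfolding normal_epi_def using i(5) by blast
  qed
  have part2: "\<exists>Rm. is_functor T A (\<lambda>x \<in> Obj T. R x, Rm) \<and>
               is_reflection (funcat A T) (vanishing_outside A T S) F
                 (\<lambda>x \<in> Obj T. R x, Rm) (F, (\<lambda>x \<in> Obj T. R x, Rm), (\<lambda>x \<in> Obj T. q x))"
    if F: "is_functor T A F" and dat: "\<forall>x \<in> Obj T.
            is_coproduct A (bracket T S x) (\<lambda>t. fst F (Dom T t)) (P x) (\<iota> x) \<and>
            \<sigma> x \<in> hom A (P x) (fst F x) \<and>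
            (\<forall>t \<in> bracket T S x. Cmp A (\<sigma> x) (\<iota> x t) = snd F t) \<and>
            is_cokernel A (\<sigma> x) (q x) \<and> R x = Cod A (q x)" for F P \<iota> \<sigma> q R
  proof -
    have rd: "rdata A T S F P \<iota> \<sigma> q R"
    proof (rule rdata.intro[OF A pA T F])
      fix x assume "x \<in> Obj T" then show "is_coproduct A (bracket T S x) (\<lambda>t. fst F (Dom T t)) (P x) (\<iota> x) \<and>
            \<sigma> x \<in> hom A (P x) (fst F x) \<and>
            (\<forall>t \<in> bracket T S x. Cmp A (\<sigma> x) (\<iota> x t) = snd F t) \<and>
            is_cokernel A (\<sigma> x) (q x) \<and> R x = Cod A (q x)" using dat by (rule bspec[rotated])
    qed
    interpret rdata A T S F P \<iota> \<sigma> q R using rd .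
    show ?thesis using Rfun_functor reflection unfolding Rfun_def by blast
  qed
  show ?thesis
  proof (intro conjI allI impI)
    show "normal_epi_reflective (funcat A T) (vanishing_outside A T S)"
      unfolding normal_epi_reflective_def
    proof (intro conjI allI impI)
      show "reflective (funcat A T) (vanishing_outside A T S)" using refl .
      fix c r u assume "c \<in> Obj (funcat A T) \<and> is_reflection (funcat A T) (vanishing_outside A T S) c r u"
      then show "normal_epi (funcat A T) u" using ne by blast
    qed
  next
    fix F P \<iota> \<sigma> q R
    assume h: "is_functor T A F \<and>
         (\<forall>x \<in> Obj T.
            is_coproduct A (bracket T S x) (\<lambda>t. fst F (Dom T t)) (P x) (\<iota> x) \<and>
            \<sigma> x \<in> hom A (P x) (fst F x) \<and>
            (\<forall>t \<in> bracket T S x. Cmp A (\<sigma> x) (\<iota> x t) = snd F t) \<and>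
            is_cokernel A (\<sigma> x) (q x) \<and> R x = Cod A (q x))"
    show "\<exists>Rm. is_functor T A (\<lambda>x \<in> Obj T. R x, Rm) \<and>
               is_reflection (funcat A T) (vanishing_outside A T S) F
                 (\<lambda>x \<in> Obj T. R x, Rm) (F, (\<lambda>x \<in> Obj T. R x, Rm), (\<lambda>x \<in> Obj T. q x))"
      using part2[OF conjunct1[OF h] conjunct2[OF h]] .
  qed
qed


end
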